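(* Let $n\ge1$, and let $\mathfrak{gl}(n)_\alpha=\{A_1,\dots,A_d\}$ and $\mathfrak{gl}(n)_\beta=\{E_{i_1j_1},\dots,E_{i_ej_e}\}$ be subsets of the standard basis $\{E_{ij}:1\le i,j\le n\}$ of $\mathfrak{gl}(n)$. Let $\mathcal G_{\rm drift}$ be the directed graph on $\mathrm V=\{1,\dots,n\}$ with an arc $(i,j)$ iff $[A_s]_{ij}\neq0$ for some $s$, and $\mathcal G_{\rm contr}$ the directed graph on $\mathrm V$ with arc set $\{(i_1,j_1),\dots,(i_e,j_e)\}$ (arcs $(i,i)$ are self-loops). If each weakly connected component of $\mathcal G_{\rm contr}$ is strongly connected with at least two nodes, and the union digraph $\mathcal G_{\rm drift}\cup\mathcal G_{\rm contr}$ is strongly connected with at least one self-loop, then the system $\dot X=\mathsf B_0X+(\sum_{i=1}^m u_i\mathsf B_i)X$ is structurally accessible on $\mathrm{GL}^+(n)$ with respect to the pair of zero patterns $\big(\Sigma_{\rm r}(\mathfrak{gl}(n)_\alpha),\Sigma_{\rm f}(\mathfrak{gl}(n)_\beta)\big)$.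
   Context: $E_{ij}$ is the $n\times n$ matrix with $(i,j)$ entry $1$ and others $0$; $\mathrm{GL}^+(n)$ is the identity component of the real general linear group, with Lie algebra $\mathfrak{gl}(n)$. For a finite subset $\{g_s\}$ of a real Lie algebra, $\Sigma_{\rm f}(\{g_s\})=\{\sum l_sg_s:l_s\in\mathbb R\}$, $\Sigma_{\rm r}(\{g_s\})=\{\sum l_sg_s:l_s\in\mathbb R,l_s\ne0\ \forall s\}$. For $\dot X=\mathsf B_0X+(\sum_{i=1}^m u_i\mathsf B_i)X$ on a connected matrix Lie group $\mathbf G$ (piecewise continuous real controls), $\mathcal R(I)$ is the set of states reachable at some time $T\ge0$ from $X(0)=I$; the system is accessible if $\mathcal R(I)$ has an interior point in $\mathbf G$. Structural accessibility w.r.t. $(\Sigma_{\rm r}(\mathfrak g_\alpha),\Sigma_{\rm f}(\mathfrak g_\beta))$: there exist $m\ge1$, $\mathsf B_0\in\Sigma_{\rm r}(\mathfrak g_\alpha)$, $\mathsf B_1,\dots,\mathsf B_m\in\Sigma_{\rm f}(\mathfrak g_\beta)$ making the system accessible. Weakly connected component: component ignoring arc directions; strongly connected: all nodes mutually reachable by directed paths. *)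

theory Defs
  imports "HOL-Analysis.Analysis"
begin

text \<open>n x n real matrices, with the index type 'n (of cardinality n) playing the role of {1..n}.\<close>
type_synonym 'n mat = "real ^ 'n ^ 'n"

definition Emat :: "'n::finite \<Rightarrow> 'n \<Rightarrow> 'n mat" where
  "Emat i j = (\<chi> k l. if k = i \<and> l = j then 1 else 0)"

definition GLp :: "('n::finite) mat set" where
  "GLp = {X. det X > 0}"

definition Sigma_f :: "'a::real_vector set \<Rightarrow> 'a set" where
  "Sigma_f S = {(\<Sum>g\<in>S. l g *\<^sub>R g) | l. True}"

definition Sigma_r :: "'a::real_vector set \<Rightarrow> 'a set" where
  "Sigma_r S = {(\<Sum>g\<in>S. l g *\<^sub>R g) | l. \<forall>g\<in>S. l g \<noteq> 0}"

definition piecewise_cont_on :: "real \<Rightarrow> real \<Rightarrow> (real \<Rightarrow> real) \<Rightarrow> bool" where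
  "piecewise_cont_on a b f \<longleftrightarrow>
     (\<exists>D. finite D \<and>
        (\<forall>t\<in>{a..b} - D. continuous (at t within {a..b}) f) \<and>
        (\<forall>t\<in>{a<..b}. \<exists>L. (f \<longlongrightarrow> L) (at_left t)) \<and>
        (\<forall>t\<in>{a..<b}. \<exists>L. (f \<longlongrightarrow> L) (at_right t)))"

definition is_trajectory ::
  "'n::finite mat \<Rightarrow> nat \<Rightarrow> (nat \<Rightarrow> 'n mat) \<Rightarrow> (nat \<Rightarrow> real \<Rightarrow> real) \<Rightarrow> real \<Rightarrow> (real \<Rightarrow> 'n mat) \<Rightarrow> bool" where
  "is_trajectory B0 m B u T X \<longleftrightarrow>
     T \<ge> 0 \<and> (\<forall>i\<in>{1..m}. piecewise_cont_on 0 T (u i)) \<and>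
     X 0 = mat 1 \<and> continuous_on {0..T} X \<and>
     (\<exists>D. finite D \<and> (\<forall>t\<in>{0..T} - D.
        (X has_vector_derivative ((B0 + (\<Sum>i\<in>{1..m}. u i t *\<^sub>R B i)) ** X t)) (at t within {0..T})))"

definition reachable_set :: "'n::finite mat \<Rightarrow> nat \<Rightarrow> (nat \<Rightarrow> 'n mat) \<Rightarrow> 'n mat set" where
  "reachable_set B0 m B = {X T | T u X. is_trajectory B0 m B u T X}"

definition accessible :: "'n::finite mat \<Rightarrow> nat \<Rightarrow> (nat \<Rightarrow> 'n mat) \<Rightarrow> bool" where
  "accessible B0 m B \<longleftrightarrow>
     (\<exists>U. openin (top_of_set GLp) U \<and> U \<noteq> {} \<and> U \<subseteq> reachable_set B0 m B)"

definition structurally_accessible :: "'n::finite mat set \<Rightarrow> 'n mat set \<Rightarrow> bool" where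
  "structurally_accessible Ga Gb \<longleftrightarrow>
     (\<exists>m B0 B. m \<ge> 1 \<and> B0 \<in> Sigma_r Ga \<and> (\<forall>i\<in>{1..m}. B i \<in> Sigma_f Gb) \<and>
        accessible B0 m B)"

definition drift_arcs :: "'n::finite mat set \<Rightarrow> ('n \<times> 'n) set" where
  "drift_arcs As = {(i, j). \<exists>A\<in>As. A $ i $ j \<noteq> 0}"

definition weak_component :: "('n \<times> 'n) set \<Rightarrow> 'n \<Rightarrow> 'n set" where
  "weak_component Arcs v = {w. (v, w) \<in> (Arcs \<union> Arcs\<inverse>)\<^sup>*}"

definition strongly_connected_set :: "('n \<times> 'n) set \<Rightarrow> 'n set \<Rightarrow> bool" where
  "strongly_connected_set Arcs S \<longleftrightarrow> (\<forall>v\<in>S. \<forall>w\<in>S. (v, w) \<in> (Arcs \<inter> (S \<times> S))\<^sup>*)"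

end

theory Submission
  imports Defs
begin

typedef (overloaded) 'a endo = "UNIV :: ('a::real_normed_vector \<Rightarrow>\<^sub>L 'a) set" morphisms erep eabs
  by auto

setup_lifting type_definition_endo

instantiation endo :: (real_normed_vector) real_normed_vector
begin
lift_definition norm_endo :: "'a endo \<Rightarrow> real" is norm .
lift_definition minus_endo :: "'a endo \<Rightarrow> 'a endo \<Rightarrow> 'a endo" is "(-)" .
lift_definition plus_endo :: "'a endo \<Rightarrow> 'a endo \<Rightarrow> 'a endo" is "(+)" .
lift_definition uminus_endo :: "'a endo \<Rightarrow> 'a endo" is "uminus" .
lift_definition zero_endo :: "'a endo" is "0" .
lift_definition scaleR_endo :: "real \<Rightarrow> 'a endo \<Rightarrow> 'a endo" is "scaleR" .
definition dist_endo :: "'a endo \<Rightarrow> 'a endo \<Rightarrow> real"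
  where "dist_endo a b = norm (a - b)"
definition uniformity_endo :: "('a endo \<times> 'a endo) filter"
  where "uniformity_endo = (INF e\<in>{0 <..}. principal {(x, y). dist x y < e})"
definition open_endo :: "'a endo set \<Rightarrow> bool"
  where "open_endo S = (\<forall>x\<in>S. \<forall>\<^sub>F (x', y) in uniformity. x' = x \<longrightarrow> y \<in> S)"
definition sgn_endo :: "'a endo \<Rightarrow> 'a endo"
  where "sgn_endo x = scaleR (inverse (norm x)) x"
instance
  apply standard
  unfolding dist_endo_def open_endo_def sgn_endo_def uniformity_endo_def
  apply (rule refl | (transfer, force simp: norm_triangle_ineq algebra_simps))+
  done
end

instantiation endo :: ("{real_normed_vector,perfect_space}") real_normed_algebra_1
begin
lift_definition times_endo :: "'a endo \<Rightarrow> 'a endo \<Rightarrow> 'a endo" is "blinfun_compose" .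
lift_definition one_endo :: "'a endo" is "id_blinfun" .
instance
proof
  fix a b c :: "'a endo" and r :: real
  show "a * b * c = a * (b * c)" by transfer (rule blinfun_eqI, simp)
  show "(a + b) * c = a * c + b * c" by transfer (rule blinfun_eqI, simp add: blinfun.bilinear_simps)
  show "a * (b + c) = a * b + a * c" by transfer (rule blinfun_eqI, simp add: blinfun.bilinear_simps)
  show "r *\<^sub>R a * b = r *\<^sub>R (a * b)" by transfer (rule blinfun_eqI, simp add: blinfun.bilinear_simps)
  show "a * r *\<^sub>R b = r *\<^sub>R (a * b)" by transfer (rule blinfun_eqI, simp add: blinfun.bilinear_simps)
  show "1 * a = a" by transfer (rule blinfun_eqI, simp)
  show "a * 1 = a" by transfer (rule blinfun_eqI, simp)
  show "(0::'a endo) \<noteq> 1" by transfer (metis norm_blinfun_id norm_zero zero_neq_one)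
  show "norm (a * b) \<le> norm a * norm b" by transfer (rule norm_blinfun_compose)
  show "norm (1::'a endo) = 1" by transfer simp
qed
end

instance endo :: ("{banach,perfect_space}") banach
proof
  fix X :: "nat \<Rightarrow> 'a endo"
  assume c: "Cauchy X"
  have d: "dist (erep a) (erep b) = dist a b" for a b :: "'a endo"
    unfolding dist_endo_def dist_norm by transfer simp
  have "Cauchy (\<lambda>n. erep (X n))" using c unfolding Cauchy_def d .
  then obtain L where L: "(\<lambda>n. erep (X n)) \<longlonglongrightarrow> L" using Cauchy_convergent_iff convergent_def by blast
  have "X \<longlonglongrightarrow> eabs L"
    using L unfolding tendsto_iff d[symmetric] by (simp add: eabs_inverse)
  then show "convergent X" unfolding convergent_def by blast
qed


definition toE :: "real^'n^'n \<Rightarrow> (real^'n) endo" where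
  "toE A = eabs (Blinfun (\<lambda>x. A *v x))"

definition fromE :: "(real^'n) endo \<Rightarrow> real^'n^'n" where
  "fromE f = matrix (blinfun_apply (erep f))"

lemma erep_toE: "blinfun_apply (erep (toE A)) = (\<lambda>x. A *v x)"
  unfolding toE_def by (simp add: eabs_inverse bounded_linear_Blinfun_apply)

lemma fromE_toE[simp]: "fromE (toE A) = A"
  unfolding fromE_def erep_toE by (rule matrix_of_matrix_vector_mul)

lemma linear_erep: "Vector_Spaces.linear (*s) (*s) (blinfun_apply (erep (f :: (real^'n::finite) endo)))"
  by (subst linear_matrix_vector_mul_eq) (rule bounded_linear.linear[OF blinfun.bounded_linear_right])

lemma linear_erep': "linear (blinfun_apply (erep (f :: (real^'n::finite) endo)))"
  by (rule bounded_linear.linear[OF blinfun.bounded_linear_right])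

lemma toE_fromE[simp]: "toE (fromE f) = f"
proof -
  have "blinfun_apply (erep (toE (fromE f))) = blinfun_apply (erep f)"
    unfolding erep_toE fromE_def by (rule ext, rule matrix_works[OF linear_erep])
  then show ?thesis by (metis blinfun_apply_inject erep_inject)
qed

lemma fromE_mult: "fromE (f * g) = fromE f ** fromE g"
proof -
  have "blinfun_apply (erep (f * g)) = blinfun_apply (erep f) \<circ> blinfun_apply (erep g)"
    by (simp add: times_endo.rep_eq fun_eq_iff)
  then show ?thesis unfolding fromE_def
    by (simp add: matrix_compose[OF linear_erep' linear_erep'])
qed

lemma toE_mult: "toE (A ** B) = toE A * toE B"
  by (metis fromE_mult fromE_toE toE_fromE)

lemma fromE_one[simp]: "fromE 1 = mat 1"
  unfolding fromE_def using matrix_id_mat_1 by (simp add: one_endo.rep_eq id_def)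

lemma toE_one: "toE (mat 1) = 1"
  by (metis fromE_one toE_fromE)

lemma fromE_add: "fromE (f + g) = fromE f + fromE g"
  unfolding fromE_def by (simp add: plus_endo.rep_eq matrix_def vec_eq_iff blinfun.add_left)

lemma fromE_scaleR: "fromE (r *\<^sub>R f) = r *\<^sub>R fromE f"
  unfolding fromE_def by (simp add: scaleR_endo.rep_eq matrix_def vec_eq_iff blinfun.scaleR_left)

lemma toE_scaleR: "toE (r *\<^sub>R A) = r *\<^sub>R toE A"
  by (metis fromE_scaleR fromE_toE toE_fromE)

lemma toE_add: "toE (A + B) = toE A + toE B"
  by (metis fromE_add fromE_toE toE_fromE)

lemma bounded_linear_fromE: "bounded_linear (fromE :: (real^'n::finite) endo \<Rightarrow> _)"
proof (rule bounded_linear_intro[where K="real CARD('n) * real CARD('n)"])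
  show "fromE (x + y) = fromE x + fromE y" for x y :: "(real^'n) endo" by (rule fromE_add)
  show "fromE (r *\<^sub>R x) = r *\<^sub>R fromE x" for r and x :: "(real^'n) endo" by (rule fromE_scaleR)
  fix f :: "(real^'n) endo"
  have e: "\<bar>fromE f $ i $ j\<bar> \<le> norm f" for i j
  proof -
    have "\<bar>fromE f $ i $ j\<bar> = \<bar>blinfun_apply (erep f) (axis j 1) $ i\<bar>"
      unfolding fromE_def matrix_def by simp
    also have "\<dots> \<le> norm (blinfun_apply (erep f) (axis j 1))" by (rule component_le_norm_cart)
    also have "\<dots> \<le> norm (erep f) * norm (axis j (1::real))" by (rule norm_blinfun)
    also have "\<dots> = norm f" by (simp add: norm_endo.rep_eq)
    finally show ?thesis .
  qed
  have "norm (fromE f) \<le> (\<Sum>i\<in>UNIV. norm (fromE f $ i))"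
    unfolding norm_vec_def by (rule L2_set_le_sum) simp
  also have "\<dots> \<le> (\<Sum>i\<in>(UNIV::'n set). \<Sum>j\<in>(UNIV::'n set). norm f)"
  proof (rule sum_mono)
    fix i
    have "norm (fromE f $ i) \<le> (\<Sum>j\<in>UNIV. \<bar>fromE f $ i $ j\<bar>)" by (rule norm_le_l1_cart)
    also have "\<dots> \<le> (\<Sum>j\<in>(UNIV::'n set). norm f)" by (rule sum_mono) (rule e)
    finally show "norm (fromE f $ i) \<le> (\<Sum>j\<in>(UNIV::'n set). norm f)" .
  qed
  also have "\<dots> = norm f * (real CARD('n) * real CARD('n))" by simp
  finally show "norm (fromE f) \<le> norm f * (real CARD('n) * real CARD('n))" .
qed

definition mexp :: "real^'n^'n \<Rightarrow> real^'n^'n" where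
  "mexp A = fromE (exp (toE A))"

lemma mexp_zero[simp]: "mexp 0 = mat 1"
proof -
  have z: "toE (0::real^'n^'n) = 0" using toE_scaleR[of 0 "0::real^'n^'n"] by simp
  show ?thesis unfolding mexp_def z exp_zero fromE_one ..
qed

lemma mexp_add: "mexp (s *\<^sub>R A) ** mexp (t *\<^sub>R A) = mexp ((s + t) *\<^sub>R A)"
  unfolding mexp_def fromE_mult[symmetric] toE_scaleR
  by (simp add: exp_add_commuting[symmetric] scaleR_add_left)

lemma mexp_commute: "A ** mexp (t *\<^sub>R A) = mexp (t *\<^sub>R A) ** A"
proof -
  have "toE A * exp (t *\<^sub>R toE A) = exp (t *\<^sub>R toE A) * toE A"
    by (simp add: exp_times_scaleR_commute)
  then show ?thesis unfolding mexp_def toE_scaleR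
    by (metis fromE_mult fromE_toE)
qed

lemma mexp_deriv:
  "((\<lambda>t. mexp (t *\<^sub>R A)) has_vector_derivative (A ** mexp (t *\<^sub>R A))) (at t within S)"
proof -
  have "((\<lambda>t. exp (t *\<^sub>R toE A)) has_vector_derivative toE A * exp (t *\<^sub>R toE A)) (at t within S)"
    using exp_scaleR_has_vector_derivative_left has_vector_derivative_at_within by blast
  from bounded_linear.has_vector_derivative[OF bounded_linear_fromE this]
  show ?thesis unfolding mexp_def toE_scaleR fromE_mult by simp
qed

lemma continuous_mexp: "continuous_on S (\<lambda>t. mexp (t *\<^sub>R A))"
  unfolding continuous_on_eq_continuous_within using has_vector_derivative_continuous[OF mexp_deriv] by blast

lemma mexp_inv: "mexp (s *\<^sub>R A) ** mexp ((-s) *\<^sub>R A) = mat 1"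
  by (simp only: mexp_add) simp

lemma mexp_inv': "mexp ((-s) *\<^sub>R A) ** mexp (s *\<^sub>R A) = mat 1"
  by (simp only: mexp_add) simp

lemma det_mexp_pos: "det (mexp (t *\<^sub>R A)) > 0"
proof -
  have "mexp (t *\<^sub>R A) = mexp ((t/2) *\<^sub>R A) ** mexp ((t/2) *\<^sub>R A)"
    by (simp add: mexp_add)
  then have 1: "det (mexp (t *\<^sub>R A)) = det (mexp ((t/2) *\<^sub>R A)) ^ 2"
    by (simp add: det_mul power2_eq_square)
  have "det (mexp ((t/2) *\<^sub>R A)) * det (mexp ((-(t/2)) *\<^sub>R A)) = 1"
    using mexp_inv[of "t/2" A] by (metis det_I det_mul)
  then have "det (mexp ((t/2) *\<^sub>R A)) \<noteq> 0" by auto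
  then show ?thesis unfolding 1 by simp
qed

lemma matrix_add_rdistrib': "((A::real^'m::finite^'n::finite) + B) ** (C::real^'p::finite^'m) = A ** C + B ** C"
  by (simp add: matrix_matrix_mult_def vec_eq_iff sum.distrib distrib_right)

lemma bilinear_mm: "bilinear ((**) :: real^'n::finite^'n \<Rightarrow> real^'n^'n \<Rightarrow> real^'n^'n)"
  unfolding bilinear_def
  by (auto intro!: linearI simp: matrix_add_ldistrib matrix_add_rdistrib' matrix_scalar_ac scalar_matrix_assoc)

lemma bb_mm: "bounded_bilinear ((**) :: real^'n::finite^'n \<Rightarrow> real^'n^'n \<Rightarrow> real^'n^'n)"
  using bilinear_mm bilinear_conv_bounded_bilinear by blast

lemma bl_mm_right: "bounded_linear (\<lambda>Z::real^'n::finite^'n. Z ** (C::real^'n^'n))"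
  using bounded_bilinear.bounded_linear_left[OF bb_mm] .

lemma bl_mm_left: "bounded_linear (\<lambda>Z::real^'n::finite^'n. (C::real^'n^'n) ** Z)"
  using bounded_bilinear.bounded_linear_right[OF bb_mm] .

lemma within_local:
  fixes t T T' :: real
  assumes "t < T" "T \<le> T'"
  shows "at t within {0..T'} = at t within {0..T}"
  by (rule at_within_nhd[of t "{..<T}"]) (use assms in auto)

lemma cont_transf:
  assumes "continuous (at t within S) f" "t \<in> S" "\<And>x. x \<in> S \<Longrightarrow> g x = f x"
  shows "continuous (at t within S) g"
proof -
  have "\<forall>\<^sub>F x in at t within S. f x = g x" by (auto simp: eventually_at_filter assms(3))
  then show ?thesis using assms(1) unfolding continuous_within using assms(2,3)
    by (metis tendsto_cong)
qed

lemma cont_const_near: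
  fixes g :: "real \<Rightarrow> 'b::topological_space"
  assumes "T < t" "\<And>x. T < x \<Longrightarrow> g x = c"
  shows "continuous (at t within S) g"
proof -
  have "continuous_on {T<..} g"
    using continuous_on_const[of "{T<..}" c] by (rule continuous_on_cong[THEN iffD1, rotated 2]) (auto simp: assms(2))
  then have "isCont g t" using assms(1) continuous_on_eq_continuous_at[of "{T<..}" g] by auto
  then show ?thesis by (rule continuous_at_imp_continuous_within)
qed

lemma pc_extend:
  assumes pc: "piecewise_cont_on 0 T f" and T: "0 \<le> T" and tau: "0 < \<tau>"
  shows "piecewise_cont_on 0 (T + \<tau>) (\<lambda>t. if t \<le> T then f t else c)"
proof -
  let ?g = "\<lambda>t. if t \<le> T then f t else c"
  obtain D where D: "finite D" and cD: "\<forall>t\<in>{0..T} - D. continuous (at t within {0..T}) f"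
    and lD: "\<forall>t\<in>{0<..T}. \<exists>L. (f \<longlongrightarrow> L) (at_left t)"
    and rD: "\<forall>t\<in>{0..<T}. \<exists>L. (f \<longlongrightarrow> L) (at_right t)"
    using pc unfolding piecewise_cont_on_def by blast
  have c1: "continuous (at t within {0..T + \<tau>}) ?g" if t: "t \<in> {0..T + \<tau>} - insert T D" for t
  proof (cases "t < T")
    case True
    have "continuous (at t within {0..T}) f" using cD t True by auto
    then have "continuous (at t within {0..T}) ?g"
      by (rule cont_transf) (use True t in auto)
    then show ?thesis using within_local[OF True, of "T + \<tau>"] tau by simp
  next
    case False
    then have "T < t" using t by auto
    then show ?thesis by (rule cont_const_near[where c=c]) auto
  qed
  have c2: "\<exists>L. (?g \<longlongrightarrow> L) (at_left t)" if t: "t \<in> {0<..T + \<tau>}" for t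
  proof (cases "t \<le> T")
    case True
    have "t \<in> {0<..T}" using True t by auto
    then obtain L where L: "(f \<longlongrightarrow> L) (at_left t)" using lD by blast
    have ev: "\<forall>\<^sub>F x in at_left t. f x = ?g x"
      by (rule eventually_mono[OF eventually_at_left_real[of "t - 1" t]]) (use True in auto)
    have "(?g \<longlongrightarrow> L) (at_left t)" using L unfolding tendsto_cong[OF ev] .
    then show ?thesis by blast
  next
    case False
    have "\<forall>\<^sub>F x in at_left t. ?g x = c"
      by (rule eventually_mono[OF eventually_at_left_real[of T t]]) (use False in auto)
    then show ?thesis by (intro exI[of _ c]) (rule tendsto_eventually)
  qed
  have c3: "\<exists>L. (?g \<longlongrightarrow> L) (at_right t)" if t: "t \<in> {0..<T + \<tau>}" for t
  proof (cases "t < T")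
    case True
    have "t \<in> {0..<T}" using True t by auto
    then obtain L where L: "(f \<longlongrightarrow> L) (at_right t)" using rD by blast
    have ev: "\<forall>\<^sub>F x in at_right t. f x = ?g x"
      by (rule eventually_mono[OF eventually_at_right_real[of t T]]) (use True in auto)
    have "(?g \<longlongrightarrow> L) (at_right t)" using L unfolding tendsto_cong[OF ev] .
    then show ?thesis by blast
  next
    case False
    have "\<forall>\<^sub>F x in at_right t. ?g x = c"
      by (rule eventually_mono[OF eventually_at_right_real[of t "t+1"]]) (use False in auto)
    then show ?thesis by (intro exI[of _ c]) (rule tendsto_eventually)
  qed
  have "finite (insert T D)" using D by simp
  then show ?thesis unfolding piecewise_cont_on_def
    using c1 c2 c3 by blast
qed


lemma reach_I: "mat 1 \<in> reachable_set B0 m B"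
proof -
  have "is_trajectory B0 m B (\<lambda>_ _. 0) 0 (\<lambda>_. mat 1)"
    unfolding is_trajectory_def piecewise_cont_on_def
  proof (intro conjI ballI)
    show "\<exists>D. finite D \<and> (\<forall>t\<in>{0..0} - D. continuous (at t within {0..0}) ((\<lambda>_ _. 0::real) i)) \<and>
      (\<forall>t\<in>{0<..0}. \<exists>L. ((\<lambda>_ _. 0::real) i \<longlongrightarrow> L) (at_left t)) \<and>
      (\<forall>t\<in>{0..<0}. \<exists>L. ((\<lambda>_ _. 0::real) i \<longlongrightarrow> L) (at_right t))" for i
      by (intro exI[of _ "{}"]) auto
    show "\<exists>D. finite D \<and> (\<forall>t\<in>{0..0} - D. ((\<lambda>_. mat 1) has_vector_derivative
        (B0 + (\<Sum>i\<in>{1..m}. (\<lambda>_ _. 0) i t *\<^sub>R B i)) ** mat 1) (at t within {0..0}))"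
      by (intro exI[of _ "{0}"]) auto
  qed auto
  then show ?thesis unfolding reachable_set_def by force
qed

lemma deriv_mexp_shift:
  fixes A C :: "real^'n::finite^'n"
  shows "((\<lambda>t. mexp ((t - T) *\<^sub>R A) ** C) has_vector_derivative (A ** mexp ((t - T) *\<^sub>R A) ** C)) (at t)"
proof -
  have e: "mexp ((t - T) *\<^sub>R A) = mexp (t *\<^sub>R A) ** mexp ((-T) *\<^sub>R A)" for t
    using mexp_add[of t A "-T"] by simp
  have "((\<lambda>t. mexp (t *\<^sub>R A) ** (mexp ((-T) *\<^sub>R A) ** C)) has_vector_derivative
      (A ** mexp (t *\<^sub>R A)) ** (mexp ((-T) *\<^sub>R A) ** C)) (at t)"
    using bounded_linear.has_vector_derivative[OF bl_mm_right[of "mexp ((-T) *\<^sub>R A) ** C"] mexp_deriv[of A t UNIV]]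
    by simp
  then show ?thesis unfolding e by (simp add: matrix_mul_assoc)
qed

lemma cont_mexp_shift:
  fixes A C :: "real^'n::finite^'n"
  shows "continuous_on S (\<lambda>t. mexp ((t - T) *\<^sub>R A) ** C)"
  by (intro continuous_at_imp_continuous_on ballI has_vector_derivative_continuous[OF deriv_mexp_shift])

lemma reach_step:
  assumes Y: "Y \<in> reachable_set B0 m B" and tau: "0 < \<tau>"
  shows "mexp (\<tau> *\<^sub>R (B0 + (\<Sum>i\<in>{1..m}. v i *\<^sub>R B i))) ** Y \<in> reachable_set B0 m B"
proof -
  obtain T u X where tr: "is_trajectory B0 m B u T X" and YX: "Y = X T"
    using Y unfolding reachable_set_def by blast
  obtain D where T0: "0 \<le> T" and pc: "\<forall>i\<in>{1..m}. piecewise_cont_on 0 T (u i)"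
    and X0: "X 0 = mat 1" and cX: "continuous_on {0..T} X" and D: "finite D"
    and dX: "\<forall>t\<in>{0..T} - D. (X has_vector_derivative ((B0 + (\<Sum>i\<in>{1..m}. u i t *\<^sub>R B i)) ** X t)) (at t within {0..T})"
    using tr unfolding is_trajectory_def by blast
  define A where "A = B0 + (\<Sum>i\<in>{1..m}. v i *\<^sub>R B i)"
  define u' where "u' = (\<lambda>i t. if t \<le> T then u i t else v i)"
  define X' where "X' = (\<lambda>t. if t \<le> T then X t else mexp ((t - T) *\<^sub>R A) ** X T)"
  have "is_trajectory B0 m B u' (T + \<tau>) X'"
    unfolding is_trajectory_def
  proof (intro conjI)
    show "0 \<le> T + \<tau>" using T0 tau by simp
    show "\<forall>i\<in>{1..m}. piecewise_cont_on 0 (T + \<tau>) (u' i)"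
      unfolding u'_def using pc pc_extend T0 tau by blast
    show "X' 0 = mat 1" unfolding X'_def using T0 X0 by simp
    show "continuous_on {0..T + \<tau>} X'"
      unfolding X'_def
    proof (rule continuous_on_cases_le[where h="\<lambda>t. t"])
      show "continuous_on {x \<in> {0..T + \<tau>}. x \<le> T} X"
        by (rule continuous_on_subset[OF cX]) auto
      show "continuous_on {x \<in> {0..T + \<tau>}. T \<le> x} (\<lambda>t. mexp ((t - T) *\<^sub>R A) ** X T)"
        by (rule cont_mexp_shift)
    qed (auto intro: continuous_intros)
    have der: "(X' has_vector_derivative ((B0 + (\<Sum>i\<in>{1..m}. u' i t *\<^sub>R B i)) ** X' t)) (at t within {0..T + \<tau>})"
      if t: "t \<in> {0..T + \<tau>} - insert T D" for t
    proof (cases "t < T")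
      case True
      then have tin: "t \<in> {0..T} - D" using t by auto
      have "(X has_vector_derivative ((B0 + (\<Sum>i\<in>{1..m}. u i t *\<^sub>R B i)) ** X t)) (at t within {0..T})"
        using dX tin by blast
      then have "(X' has_vector_derivative ((B0 + (\<Sum>i\<in>{1..m}. u i t *\<^sub>R B i)) ** X t)) (at t within {0..T})"
        by (rule has_vector_derivative_transform_within[where d=1]) (use tin in \<open>auto simp: X'_def\<close>)
      moreover have "u' i t = u i t" for i unfolding u'_def using True by simp
      moreover have "X' t = X t" unfolding X'_def using True by simp
      ultimately show ?thesis using within_local[OF True, of "T + \<tau>"] tau by simp
    next
      case False
      then have Tt: "T < t" using t by auto
      have "((\<lambda>t. mexp ((t - T) *\<^sub>R A) ** X T) has_vector_derivative (A ** mexp ((t - T) *\<^sub>R A) ** X T)) (at t)"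
        by (rule deriv_mexp_shift)
      then have "(X' has_vector_derivative (A ** mexp ((t - T) *\<^sub>R A) ** X T)) (at t)"
        by (rule has_vector_derivative_transform_within_open[where S="{T<..}"]) (use Tt in \<open>auto simp: X'_def\<close>)
      then have "(X' has_vector_derivative (A ** mexp ((t - T) *\<^sub>R A) ** X T)) (at t within {0..T + \<tau>})"
        by (rule has_vector_derivative_at_within)
      moreover have "u' i t = v i" for i unfolding u'_def using Tt by simp
      moreover have "X' t = mexp ((t - T) *\<^sub>R A) ** X T" unfolding X'_def using Tt by simp
      ultimately show ?thesis unfolding A_def by (simp add: matrix_mul_assoc)
    qed
    show "\<exists>D. finite D \<and> (\<forall>t\<in>{0..T + \<tau>} - D. (X' has_vector_derivative ((B0 + (\<Sum>i\<in>{1..m}. u' i t *\<^sub>R B i)) ** X' t)) (at t within {0..T + \<tau>}))"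
      using D der by (intro exI[of _ "insert T D"]) blast
  qed
  moreover have "X' (T + \<tau>) = mexp (\<tau> *\<^sub>R A) ** Y"
    unfolding X'_def YX using tau by simp
  ultimately have "mexp (\<tau> *\<^sub>R A) ** Y = X' (T + \<tau>) \<and> is_trajectory B0 m B u' (T + \<tau>) X'" by simp
  then show ?thesis unfolding reachable_set_def A_def by blast
qed

type_synonym 'n cfg = "((real^'n^'n) \<times> real) list"

primrec Phi :: "('n::finite) cfg \<Rightarrow> real^'n^'n" where
  "Phi [] = mat 1"
| "Phi (p # c) = mexp (snd p *\<^sub>R fst p) ** Phi c"

primrec Phiinv :: "('n::finite) cfg \<Rightarrow> real^'n^'n" where
  "Phiinv [] = mat 1"
| "Phiinv (p # c) = Phiinv c ** mexp ((- snd p) *\<^sub>R fst p)"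

definition Adj :: "real^'n^'n \<Rightarrow> real \<Rightarrow> real^'n^'n \<Rightarrow> real^'n::finite^'n" where
  "Adj A s X = mexp (s *\<^sub>R A) ** X ** mexp ((- s) *\<^sub>R A)"

primrec dirs :: "('n::finite) cfg \<Rightarrow> (real^'n^'n) list" where
  "dirs [] = []"
| "dirs (p # c) = fst p # map (Adj (fst p) (snd p)) (dirs c)"

definition valid :: "(real^'n^'n) set \<Rightarrow> ('n::finite) cfg \<Rightarrow> bool" where
  "valid AA c \<longleftrightarrow> (\<forall>p\<in>set c. fst p \<in> AA \<and> snd p > 0)"

lemma valid_simps[simp]: "valid AA []" "valid AA (p # c) \<longleftrightarrow> fst p \<in> AA \<and> snd p > 0 \<and> valid AA c"
  "valid AA (c @ d) \<longleftrightarrow> valid AA c \<and> valid AA d"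
  unfolding valid_def by auto

lemma Phi_Phiinv: "Phi c ** Phiinv c = mat 1"
proof (induction c)
  case (Cons p c)
  have "Phi (p # c) ** Phiinv (p # c) = mexp (snd p *\<^sub>R fst p) ** (Phi c ** Phiinv c) ** mexp ((- snd p) *\<^sub>R fst p)"
    by (simp add: matrix_mul_assoc)
  also have "\<dots> = mat 1" by (simp only: mexp_inv matrix_mul_rid Cons.IH)
  finally show ?case .
qed simp

lemma Phiinv_Phi: "Phiinv c ** Phi c = mat 1"
proof (induction c)
  case (Cons p c)
  have "Phiinv (p # c) ** Phi (p # c) = Phiinv c ** (mexp ((- snd p) *\<^sub>R fst p) ** mexp (snd p *\<^sub>R fst p)) ** Phi c"
    by (simp add: matrix_mul_assoc)
  also have "\<dots> = mat 1" by (simp only: mexp_inv' matrix_mul_rid Cons.IH)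
  finally show ?case .
qed simp

lemma Adj_self: "Adj A s A = A"
proof -
  have "Adj A s A = A ** (mexp (s *\<^sub>R A) ** mexp ((- s) *\<^sub>R A))"
    unfolding Adj_def by (simp add: mexp_commute matrix_mul_assoc)
  then show ?thesis by (simp only: mexp_inv matrix_mul_rid)
qed

lemma linear_conj: "linear (\<lambda>X::real^'n::finite^'n. (P::real^'n^'n) ** X ** (Q::real^'n^'n))"
  by (rule linearI) (simp_all add: matrix_add_ldistrib matrix_add_rdistrib' matrix_scalar_ac scalar_matrix_assoc)

lemma inj_conj:
  fixes P Q P' Q' :: "real^'n::finite^'n"
  assumes "P' ** P = mat 1" "Q ** Q' = mat 1"
  shows "inj (\<lambda>X. P ** X ** Q)"
proof (rule injI)
  fix X Y assume "P ** X ** Q = P ** Y ** Q"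
  then have "P' ** (P ** X ** Q) ** Q' = P' ** (P ** Y ** Q) ** Q'" by simp
  then have "(P' ** P) ** X ** (Q ** Q') = (P' ** P) ** Y ** (Q ** Q')" by (simp add: matrix_mul_assoc)
  then show "X = Y" using assms by simp
qed

lemma dirs_append: "dirs (p @ c) = dirs p @ map (\<lambda>X. Phi p ** X ** Phiinv p) (dirs c)"
proof (induction p)
  case Nil
  show ?case by simp
next
  case (Cons q p)
  show ?case using Cons by (simp add: Adj_def comp_def matrix_mul_assoc)
qed

lemma reach_Phi:
  assumes real: "\<forall>A\<in>AA. \<exists>v. A = B0 + (\<Sum>i\<in>{1..m}. v i *\<^sub>R B i)"
  shows "valid AA c \<Longrightarrow> Phi c \<in> reachable_set B0 m B"
proof (induction c)
  case Nil
  then show ?case using reach_I by simp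
next
  case (Cons p c)
  then obtain v where "fst p = B0 + (\<Sum>i\<in>{1..m}. v i *\<^sub>R B i)" using real by auto
  then show ?case using Cons reach_step[of "Phi c" B0 m B "snd p" v] by simp
qed

lemma det_Phi: "det (Phi c) > 0"
  by (induction c) (simp_all add: det_mul det_mexp_pos)


lemma matrix_mul_lneg: "(- (A::real^'m::finite^'n::finite)) ** (X::real^'p::finite^'m) = - (A ** X)"
  by (simp add: matrix_matrix_mult_def vec_eq_iff sum_negf)

lemma deriv_in_subspace:
  fixes f :: "real \<Rightarrow> 'a::euclidean_space"
  assumes d: "(f has_vector_derivative f') (at 0)" and W: "subspace W"
    and pos: "\<And>\<tau>. \<tau> > 0 \<Longrightarrow> f \<tau> \<in> W" and z: "f 0 \<in> W"
  shows "f' \<in> W"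
proof -
  have "(f has_derivative (\<lambda>x. x *\<^sub>R f')) (at 0 within {0<..})"
    using d unfolding has_vector_derivative_def by (rule has_derivative_subset) simp
  then have lim: "((\<lambda>y. ((f y - f 0) - (\<lambda>x. x *\<^sub>R f') (y - 0)) /\<^sub>R norm (y - 0)) \<longlongrightarrow> 0) (at 0 within {0<..})"
    by (rule has_derivative_at_within[THEN iffD1, THEN conjunct2])
  have ev: "\<forall>\<^sub>F y in at 0 within {0<..}. ((f y - f 0) - (\<lambda>x. x *\<^sub>R f') (y - 0)) /\<^sub>R norm (y - 0)
      = (f y - f 0) /\<^sub>R y - f'"
    by (auto simp: eventually_at_filter scaleR_diff_right)
  have "((\<lambda>y. (f y - f 0) /\<^sub>R y - f') \<longlongrightarrow> 0) (at 0 within {0<..})"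
    using lim unfolding tendsto_cong[OF ev] .
  then have lim2: "((\<lambda>y. (f y - f 0) /\<^sub>R y) \<longlongrightarrow> f') (at 0 within {0<..})"
    using Lim_null by blast
  have ev2: "\<forall>\<^sub>F y in at 0 within {0<..}. (f y - f 0) /\<^sub>R y \<in> W"
    using pos z W by (auto simp: eventually_at_filter subspace_diff subspace_scale)
  show ?thesis
    by (rule Lim_in_closed_set[OF closed_subspace[OF W] ev2 _ lim2]) simp
qed

lemma bl_conj: "bounded_linear (\<lambda>X::real^'n::finite^'n. (P::real^'n^'n) ** X ** (Q::real^'n^'n))"
  using linear_conj linear_conv_bounded_linear by blast

lemma deriv_conj:
  fixes A X P Q :: "real^'n::finite^'n"
  shows "((\<lambda>\<tau>. P ** (mexp ((- \<tau>) *\<^sub>R A) ** X ** mexp (\<tau> *\<^sub>R A)) ** Q)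
      has_vector_derivative (P ** (X ** A - A ** X) ** Q)) (at 0)"
proof -
  have e: "(\<lambda>\<tau>. mexp ((- \<tau>) *\<^sub>R A)) = (\<lambda>\<tau>. mexp (\<tau> *\<^sub>R (- A)))" by simp
  have d1: "((\<lambda>\<tau>. mexp ((- \<tau>) *\<^sub>R A)) has_vector_derivative (- A) ** mexp (0 *\<^sub>R (- A))) (at 0)"
    unfolding e by (rule mexp_deriv)
  have d2: "((\<lambda>\<tau>. mexp ((- \<tau>) *\<^sub>R A) ** X) has_vector_derivative ((- A) ** mexp (0 *\<^sub>R (- A))) ** X) (at 0)"
    using bounded_linear.has_vector_derivative[OF bl_mm_right[of X] d1] by simp
  have d3: "((\<lambda>\<tau>. mexp ((- \<tau>) *\<^sub>R A) ** X ** mexp (\<tau> *\<^sub>R A)) has_vector_derivative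
      (mexp ((- 0) *\<^sub>R A) ** X ** (A ** mexp (0 *\<^sub>R A)) + ((- A) ** mexp (0 *\<^sub>R (- A))) ** X ** mexp (0 *\<^sub>R A))) (at 0)"
    by (rule bounded_bilinear.has_vector_derivative[OF bb_mm d2 mexp_deriv])
  have v: "mexp ((- 0) *\<^sub>R A) ** X ** (A ** mexp (0 *\<^sub>R A)) + ((- A) ** mexp (0 *\<^sub>R (- A))) ** X ** mexp (0 *\<^sub>R A)
      = X ** A - A ** X"
    by (simp add: matrix_mul_lneg)
  show ?thesis
    using bounded_linear.has_vector_derivative[OF bl_conj[of P Q] d3] unfolding v by simp
qed

lemma maxrank_full:
  fixes AA :: "(real^'n::finite^'n) set"
  assumes full: "\<And>V. subspace V \<Longrightarrow> AA \<subseteq> V \<Longrightarrow> (\<forall>X\<in>V. \<forall>A\<in>AA. X ** A - A ** X \<in> V) \<Longrightarrow> V = UNIV"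
  shows "\<exists>c. valid AA c \<and> span (set (dirs c)) = UNIV"
proof -
  define R where "R = {dim (set (dirs c)) | c. valid AA c}"
  have finR: "finite R"
  proof (rule finite_subset[of _ "{..DIM(real^'n^'n)}"])
    show "R \<subseteq> {..DIM(real^'n^'n)}" unfolding R_def using dim_subset_UNIV by blast
  qed simp
  have "valid AA []" by simp
  then have "dim (set (dirs ([]::'n cfg))) \<in> R" unfolding R_def by blast
  then have "R \<noteq> {}" by blast
  define r where "r = Max R"
  have rmax: "dim (set (dirs c)) \<le> r" if "valid AA c" for c
    unfolding r_def using that finR by (intro Max_ge) (auto simp: R_def)
  obtain c0 where c0: "valid AA c0" "dim (set (dirs c0)) = r"
  proof -
    have "r \<in> R" unfolding r_def by (rule Max_in[OF finR \<open>R \<noteq> {}\<close>])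
    then show ?thesis using that unfolding R_def by auto
  qed
  have K1: "A \<in> span (set (dirs c)) \<and> dim (set (dirs ((A, s) # c))) = r"
    if c: "valid AA c" "dim (set (dirs c)) = r" and A: "A \<in> AA" and s: "s > 0" for c A s
  proof -
    have set_eq: "set (dirs ((A, s) # c)) = Adj A s ` insert A (set (dirs c))"
      by (simp add: Adj_self)
    have inj: "inj (Adj A s)"
      unfolding Adj_def[abs_def] by (rule inj_conj[OF mexp_inv' mexp_inv])
    have lin: "linear (Adj A s)"
      unfolding Adj_def[abs_def] by (rule linear_conj)
    have deq: "dim (set (dirs ((A, s) # c))) = dim (insert A (set (dirs c)))"
      unfolding set_eq by (rule dim_image_eq[OF lin]) (use inj in \<open>auto intro: inj_on_subset\<close>)
    have "valid AA ((A, s) # c)" using c A s by simp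
    then have "dim (set (dirs ((A, s) # c))) \<le> r" by (rule rmax)
    then have Ain: "A \<in> span (set (dirs c))" using deq c(2) dim_insert[of A "set (dirs c)"]
      by (auto split: if_splits)
    then show ?thesis using deq c(2) dim_insert[of A "set (dirs c)"] by simp
  qed
  have K2: "dim (set (dirs (p @ c0))) = r" if "valid AA p" for p
    using that
  proof (induction p)
    case Nil then show ?case using c0 by simp
  next
    case (Cons q p)
    obtain A s where q: "q = (A, s)" by (cases q)
    then show ?case using K1[of "p @ c0" A s] Cons c0 by simp
  qed
  define W0 where "W0 = span (set (dirs c0))"
  have K3: "Phiinv p ** A ** Phi p \<in> W0" if p: "valid AA p" and A: "A \<in> AA" for p A
  proof -
    let ?cj = "\<lambda>X. Phi p ** X ** Phiinv p"
    have linc: "linear ?cj" by (rule linear_conj)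
    have injc: "inj ?cj" by (rule inj_conj[OF Phiinv_Phi[of p] Phiinv_Phi[of p]])
    have sub: "span (?cj ` set (dirs c0)) \<subseteq> span (set (dirs (p @ c0)))"
      by (rule span_mono) (auto simp: dirs_append)
    have "dim (?cj ` set (dirs c0)) = dim (set (dirs c0))"
      by (rule dim_image_eq[OF linc]) (rule inj_on_subset[OF injc], simp)
    then have "dim (?cj ` set (dirs c0)) = r" using c0 by simp
    then have eq: "span (?cj ` set (dirs c0)) = span (set (dirs (p @ c0)))"
      using K2[OF p] by (intro subspace_dim_equal[OF subspace_span subspace_span sub]) simp
    have "A \<in> span (set (dirs (p @ c0)))" using K1[OF _ K2[OF p] A, of 1] p c0 by simp
    then have "A \<in> ?cj ` W0" unfolding eq[symmetric] W0_def linear_span_image[OF linc] .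
    then obtain Z where Z: "Z \<in> W0" "A = ?cj Z" by blast
    have "Phiinv p ** A ** Phi p = (Phiinv p ** Phi p) ** Z ** (Phiinv p ** Phi p)"
      unfolding Z(2) by (simp add: matrix_mul_assoc)
    then show ?thesis using Z(1) by (simp add: Phiinv_Phi)
  qed
  define V where "V = {X. \<forall>p. valid AA p \<longrightarrow> Phiinv p ** X ** Phi p \<in> W0}"
  have sW0: "subspace W0" unfolding W0_def by (rule subspace_span)
  have sV: "subspace V"
    unfolding subspace_def V_def
  proof (intro conjI ballI allI CollectI impI)
    fix p assume "valid AA p"
    show "Phiinv p ** 0 ** Phi p \<in> W0" using sW0 linear_0[OF linear_conj] by (simp add: subspace_0)
  next
    fix x y p assume x: "x \<in> {X. \<forall>p. valid AA p \<longrightarrow> Phiinv p ** X ** Phi p \<in> W0}"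
      and y: "y \<in> {X. \<forall>p. valid AA p \<longrightarrow> Phiinv p ** X ** Phi p \<in> W0}" and p: "valid AA p"
    have "Phiinv p ** (x + y) ** Phi p = Phiinv p ** x ** Phi p + Phiinv p ** y ** Phi p"
      using linear_add[OF linear_conj] by blast
    then show "Phiinv p ** (x + y) ** Phi p \<in> W0" using x y p sW0 by (simp add: subspace_add)
  next
    fix c x p assume x: "x \<in> {X. \<forall>p. valid AA p \<longrightarrow> Phiinv p ** X ** Phi p \<in> W0}" and p: "valid AA p"
    have "Phiinv p ** (c *\<^sub>R x) ** Phi p = c *\<^sub>R (Phiinv p ** x ** Phi p)"
      using linear_scale[OF linear_conj] by blast
    then show "Phiinv p ** (c *\<^sub>R x) ** Phi p \<in> W0" using x p sW0 by (simp add: subspace_scale)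
  qed
  have AV: "AA \<subseteq> V" unfolding V_def using K3 by blast
  have cl: "\<forall>X\<in>V. \<forall>A\<in>AA. X ** A - A ** X \<in> V"
  proof (intro ballI)
    fix X A assume X: "X \<in> V" and A: "A \<in> AA"
    show "X ** A - A ** X \<in> V" unfolding V_def
    proof (intro CollectI allI impI)
      fix p assume p: "valid AA p"
      let ?f = "\<lambda>\<tau>. Phiinv p ** (mexp ((- \<tau>) *\<^sub>R A) ** X ** mexp (\<tau> *\<^sub>R A)) ** Phi p"
      have pos: "?f \<tau> \<in> W0" if "\<tau> > 0" for \<tau>
      proof -
        have "valid AA ((A, \<tau>) # p)" using p A that by simp
        then have "Phiinv ((A, \<tau>) # p) ** X ** Phi ((A, \<tau>) # p) \<in> W0" using X unfolding V_def by blast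
        then show ?thesis by (simp add: matrix_mul_assoc)
      qed
      have z: "?f 0 \<in> W0" using X p unfolding V_def by simp
      show "Phiinv p ** (X ** A - A ** X) ** Phi p \<in> W0"
        by (rule deriv_in_subspace[OF deriv_conj sW0 pos z])
    qed
  qed
  have "V = UNIV" by (rule full[OF sV AV cl])
  have "Y \<in> W0" for Y
  proof -
    have "Y \<in> V" using \<open>V = UNIV\<close> by simp
    then have "Phiinv [] ** Y ** Phi [] \<in> W0" unfolding V_def using valid_simps(1)[of AA] by blast
    then show ?thesis by simp
  qed
  then show ?thesis using c0 unfolding W0_def by blast
qed

lemma span_list_coeffs:
  fixes x :: "'a::real_vector"
  shows "x \<in> span (set xs) \<Longrightarrow> \<exists>a. x = (\<Sum>k<length xs. a k *\<^sub>R xs ! k)"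
proof (induction xs arbitrary: x)
  case Nil
  then show ?case by simp
next
  case (Cons y xs)
  then obtain t where "x - t *\<^sub>R y \<in> span (set xs)"
    using span_breakdown_eq[of x y "set xs"] by auto
  then obtain a where a: "x - t *\<^sub>R y = (\<Sum>k<length xs. a k *\<^sub>R xs ! k)" using Cons.IH by blast
  define a' where "a' = (\<lambda>k. if k = 0 then t else a (k - 1))"
  have "(\<Sum>k<length (y # xs). a' k *\<^sub>R (y # xs) ! k) = t *\<^sub>R y + (\<Sum>k<length xs. a k *\<^sub>R xs ! k)"
    unfolding a'_def by (simp add: sum.lessThan_Suc_shift del: sum.lessThan_Suc)
  then show ?case using a by (metis add.commute diff_add_cancel)
qed

lemma dual_functionals:
  fixes xs :: "('a::euclidean_space) list"
  assumes sp: "span (set xs) = UNIV"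
  shows "\<exists>\<Lambda>::nat \<Rightarrow> 'a \<Rightarrow> real. (\<forall>k. linear (\<Lambda> k)) \<and> (\<forall>Y. (\<Sum>k<length xs. \<Lambda> k Y *\<^sub>R xs ! k) = Y)"
proof -
  have "\<forall>b. \<exists>a. b = (\<Sum>k<length xs. a k *\<^sub>R xs ! k)"
    using span_list_coeffs sp by blast
  then obtain a where a: "\<And>b. b = (\<Sum>k<length xs. a b k *\<^sub>R xs ! k)" by metis
  define \<Lambda> where "\<Lambda> = (\<lambda>k Y. \<Sum>b\<in>Basis. (Y \<bullet> b) * a b k)"
  have lin: "linear (\<Lambda> k)" for k
    unfolding \<Lambda>_def by (auto intro!: linearI simp: inner_add_left sum.distrib distrib_right sum_distrib_left mult.assoc)
  have "(\<Sum>k<length xs. \<Lambda> k Y *\<^sub>R xs ! k) = Y" for Y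
  proof -
    have "(\<Sum>k<length xs. \<Lambda> k Y *\<^sub>R xs ! k) = (\<Sum>k<length xs. \<Sum>b\<in>Basis. (Y \<bullet> b) *\<^sub>R (a b k *\<^sub>R xs ! k))"
      unfolding \<Lambda>_def by (simp add: scaleR_sum_left)
    also have "\<dots> = (\<Sum>b\<in>Basis. (Y \<bullet> b) *\<^sub>R (\<Sum>k<length xs. a b k *\<^sub>R xs ! k))"
      by (subst sum.swap) (simp add: scaleR_sum_right)
    also have "\<dots> = (\<Sum>b\<in>Basis. (Y \<bullet> b) *\<^sub>R b)" using a[symmetric] by simp
    also have "\<dots> = Y" by (rule euclidean_representation)
    finally show ?thesis .
  qed
  then show ?thesis using lin by blast
qed

primrec Fh :: "('n::finite) cfg \<Rightarrow> (nat \<Rightarrow> real^'n^'n \<Rightarrow> real) \<Rightarrow> real^'n^'n \<Rightarrow> real^'n^'n" where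
  "Fh [] \<Lambda> h = mat 1"
| "Fh (p # c) \<Lambda> h = mexp ((snd p + \<Lambda> 0 h) *\<^sub>R fst p) ** Fh c (\<lambda>k. \<Lambda> (Suc k)) h"

definition sumL :: "('n::finite) cfg \<Rightarrow> (nat \<Rightarrow> real^'n^'n \<Rightarrow> real) \<Rightarrow> real^'n^'n \<Rightarrow> real^'n^'n" where
  "sumL c \<Lambda> h' = (\<Sum>k<length c. \<Lambda> k h' *\<^sub>R (dirs c ! k))"

lemma length_dirs[simp]: "length (dirs c) = length c"
  by (induction c) auto

lemma Fh_zero: "(\<And>k. \<Lambda> k 0 = 0) \<Longrightarrow> Fh c \<Lambda> 0 = Phi c"
  by (induction c arbitrary: \<Lambda>) auto

lemma sumL_Cons: "sumL ((A, s) # c) \<Lambda> h' = \<Lambda> 0 h' *\<^sub>R A + Adj A s (sumL c (\<lambda>k. \<Lambda> (Suc k)) h')"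
proof -
  have lin: "linear (Adj A s)" unfolding Adj_def[abs_def] by (rule linear_conj)
  have "sumL ((A, s) # c) \<Lambda> h' = \<Lambda> 0 h' *\<^sub>R A + (\<Sum>k<length c. \<Lambda> (Suc k) h' *\<^sub>R Adj A s (dirs c ! k))"
    unfolding sumL_def by (simp add: sum.lessThan_Suc_shift del: sum.lessThan_Suc)
  also have "(\<Sum>k<length c. \<Lambda> (Suc k) h' *\<^sub>R Adj A s (dirs c ! k)) = Adj A s (sumL c (\<lambda>k. \<Lambda> (Suc k)) h')"
    unfolding sumL_def by (simp add: linear_sum[OF lin] linear_scale[OF lin])
  finally show ?thesis .
qed

lemma Fh_deriv:
  assumes "\<And>k. linear (\<Lambda> k)"
  shows "(Fh c \<Lambda> has_derivative (\<lambda>h'. sumL c \<Lambda> h' ** Phi c)) (at 0)"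
  using assms
proof (induction c arbitrary: \<Lambda>)
  case Nil
  show ?case by (simp add: sumL_def)
next
  case (Cons p c)
  obtain A s where p: "p = (A, s)" by (cases p)
  have bl: "bounded_linear (\<Lambda> k)" for k using linear_conv_bounded_linear[THEN iffD1, OF Cons.prems] .
  have z: "\<Lambda> k 0 = 0" for k by (rule linear_0[OF Cons.prems])
  let ?L = "\<lambda>k. \<Lambda> (Suc k)"
  have IH: "(Fh c ?L has_derivative (\<lambda>h'. sumL c ?L h' ** Phi c)) (at 0)"
    by (rule Cons.IH) (rule Cons.prems)
  have d0: "((\<lambda>h. s + \<Lambda> 0 h) has_derivative \<Lambda> 0) (at 0)"
    using has_derivative_add[OF has_derivative_const bounded_linear_imp_has_derivative[OF bl[of 0]], of s] by simp
  have dm: "((\<lambda>t. mexp (t *\<^sub>R A)) has_derivative (\<lambda>x. x *\<^sub>R (A ** mexp ((s + \<Lambda> 0 0) *\<^sub>R A)))) (at (s + \<Lambda> 0 0))"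
    using mexp_deriv[of A "s + \<Lambda> 0 0" UNIV] unfolding has_vector_derivative_def by simp
  have dE: "((\<lambda>h. mexp ((s + \<Lambda> 0 h) *\<^sub>R A)) has_derivative (\<lambda>h'. \<Lambda> 0 h' *\<^sub>R (A ** mexp (s *\<^sub>R A)))) (at 0)"
    using has_derivative_compose[OF d0 dm] z by simp
  have dP: "((\<lambda>h. mexp ((s + \<Lambda> 0 h) *\<^sub>R A) ** Fh c ?L h) has_derivative
      (\<lambda>h'. mexp ((s + \<Lambda> 0 0) *\<^sub>R A) ** (sumL c ?L h' ** Phi c) + (\<Lambda> 0 h' *\<^sub>R (A ** mexp (s *\<^sub>R A))) ** Fh c ?L 0)) (at 0)"
    by (rule bounded_bilinear.FDERIV[OF bb_mm dE IH])
  have eq: "mexp ((s + \<Lambda> 0 0) *\<^sub>R A) ** (sumL c ?L h' ** Phi c) + (\<Lambda> 0 h' *\<^sub>R (A ** mexp (s *\<^sub>R A))) ** Fh c ?L 0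
      = sumL ((A, s) # c) \<Lambda> h' ** Phi ((A, s) # c)" for h'
  proof -
    have F0: "Fh c ?L 0 = Phi c" by (rule Fh_zero) (simp add: z)
    have "sumL ((A, s) # c) \<Lambda> h' ** Phi ((A, s) # c)
        = (\<Lambda> 0 h' *\<^sub>R A + mexp (s *\<^sub>R A) ** sumL c ?L h' ** mexp ((- s) *\<^sub>R A)) ** (mexp (s *\<^sub>R A) ** Phi c)"
      by (simp add: sumL_Cons Adj_def)
    also have "\<dots> = \<Lambda> 0 h' *\<^sub>R (A ** mexp (s *\<^sub>R A) ** Phi c)
        + mexp (s *\<^sub>R A) ** sumL c ?L h' ** (mexp ((- s) *\<^sub>R A) ** mexp (s *\<^sub>R A)) ** Phi c"
      by (simp add: matrix_add_rdistrib' matrix_mul_assoc scalar_matrix_assoc)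
    also have "\<dots> = \<Lambda> 0 h' *\<^sub>R (A ** mexp (s *\<^sub>R A) ** Phi c) + mexp (s *\<^sub>R A) ** sumL c ?L h' ** Phi c"
      by (simp only: mexp_inv' matrix_mul_rid)
    finally show ?thesis using F0 z by (simp add: matrix_mul_assoc scalar_matrix_assoc add.commute)
  qed
  show ?case using dP unfolding eq p by simp
qed

lemma Fh_cont:
  assumes "\<And>k. linear (\<Lambda> k)"
  shows "continuous_on UNIV (Fh c \<Lambda>)"
  using assms
proof (induction c arbitrary: \<Lambda>)
  case Nil
  show ?case by simp
next
  case (Cons p c)
  have bl: "bounded_linear (\<Lambda> k)" for k using linear_conv_bounded_linear[THEN iffD1, OF Cons.prems] .
  have c1: "continuous_on UNIV (\<lambda>h. snd p + \<Lambda> 0 h)"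
    using linear_continuous_on[OF bl[of 0]] by (auto intro: continuous_intros)
  have c2: "continuous_on UNIV (\<lambda>h. mexp ((snd p + \<Lambda> 0 h) *\<^sub>R fst p))"
    by (rule continuous_on_compose2[OF continuous_mexp c1]) auto
  have c3: "continuous_on UNIV (Fh c (\<lambda>k. \<Lambda> (Suc k)))" by (rule Cons.IH) (rule Cons.prems)
  show ?case unfolding Fh.simps by (rule bounded_bilinear.continuous_on[OF bb_mm c2 c3])
qed

lemma Fh_reach:
  assumes real: "\<forall>A\<in>AA. \<exists>v. A = B0 + (\<Sum>i\<in>{1..m}. v i *\<^sub>R B i)"
  shows "valid AA c \<Longrightarrow> (\<forall>k<length c. 0 < snd (c ! k) + \<Lambda> k h) \<Longrightarrow>
    Fh c \<Lambda> h \<in> reachable_set B0 m B \<and> det (Fh c \<Lambda> h) > 0"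
proof (induction c arbitrary: \<Lambda>)
  case Nil
  then show ?case using reach_I by simp
next
  case (Cons p c)
  have pos0: "0 < snd p + \<Lambda> 0 h" using Cons.prems(2) by force
  have posS: "\<forall>k<length c. 0 < snd (c ! k) + \<Lambda> (Suc k) h" using Cons.prems(2) by force
  have IH: "Fh c (\<lambda>k. \<Lambda> (Suc k)) h \<in> reachable_set B0 m B \<and> det (Fh c (\<lambda>k. \<Lambda> (Suc k)) h) > 0"
    using Cons.IH[of "\<lambda>k. \<Lambda> (Suc k)"] Cons.prems posS by simp
  obtain v where v: "fst p = B0 + (\<Sum>i\<in>{1..m}. v i *\<^sub>R B i)" using real Cons.prems(1) by auto
  have "Fh (p # c) \<Lambda> h \<in> reachable_set B0 m B"
    using reach_step[OF conjunct1[OF IH] pos0, of v] v by simp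
  moreover have "det (Fh (p # c) \<Lambda> h) > 0" using IH by (simp add: det_mul det_mexp_pos)
  ultimately show ?case by blast
qed


lemma accessible_of_full:
  fixes AA :: "(real^'n::finite^'n) set"
  assumes real: "\<forall>A\<in>AA. \<exists>v. A = B0 + (\<Sum>i\<in>{1..m}. v i *\<^sub>R B i)"
    and full: "\<And>V. subspace V \<Longrightarrow> AA \<subseteq> V \<Longrightarrow> (\<forall>X\<in>V. \<forall>A\<in>AA. X ** A - A ** X \<in> V) \<Longrightarrow> V = UNIV"
  shows "accessible B0 m B"
proof -
  obtain c where c: "valid AA c" "span (set (dirs c)) = UNIV" using maxrank_full[OF full] by blast
  obtain \<Lambda> where lin: "\<And>k. linear (\<Lambda> k)" and rep: "\<And>Y. (\<Sum>k<length (dirs c). \<Lambda> k Y *\<^sub>R dirs c ! k) = Y"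
    using dual_functionals[OF c(2)] by blast
  have bl: "bounded_linear (\<Lambda> k)" for k using linear_conv_bounded_linear[THEN iffD1, OF lin] .
  have z: "\<Lambda> k 0 = 0" for k by (rule linear_0[OF lin])
  have sumL_id: "sumL c \<Lambda> h' = h'" for h' unfolding sumL_def using rep[of h'] by simp
  define T where "T = (\<Inter>k\<in>{..<length c}. {h. 0 < snd (c ! k) + \<Lambda> k h})"
  have openT: "open T" unfolding T_def
  proof (intro open_INT ballI)
    fix k
    have "continuous_on UNIV (\<lambda>h. snd (c ! k) + \<Lambda> k h)"
      using linear_continuous_on[OF bl[of k]] by (auto intro: continuous_intros)
    then show "open {h. 0 < snd (c ! k) + \<Lambda> k h}"
      by (rule open_Collect_less[OF continuous_on_const])
  qed simp
  have T0: "0 \<in> T"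
  proof -
    have "0 < snd (c ! k)" if "k < length c" for k using c(1) that unfolding valid_def by (meson nth_mem)
    then show ?thesis unfolding T_def using z by simp
  qed
  have der0: "(Fh c \<Lambda> has_derivative (\<lambda>h'. sumL c \<Lambda> h' ** Phi c)) (at 0)"
    by (rule Fh_deriv[OF lin])
  have der: "(Fh c \<Lambda> has_derivative (\<lambda>h'. h' ** Phi c)) (at 0)"
    using der0 unfolding sumL_id .
  have inv: "(\<lambda>h'. h' ** Phi c) \<circ> (\<lambda>Y. Y ** Phiinv c) = id"
    by (rule ext) (simp add: matrix_mul_assoc[symmetric] Phiinv_Phi)
  have "Fh c \<Lambda> 0 \<in> interior (Fh c \<Lambda> ` T)"
    by (rule sussmann_open_mapping[OF open_UNIV Fh_cont[OF lin] UNIV_I der bl_mm_right inv subset_UNIV])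
      (simp add: interior_open[OF openT] T0)
  then have ne: "interior (Fh c \<Lambda> ` T) \<noteq> {}" by blast
  have sub: "Fh c \<Lambda> ` T \<subseteq> reachable_set B0 m B \<inter> GLp"
  proof
    fix Y assume "Y \<in> Fh c \<Lambda> ` T"
    then obtain h where h: "h \<in> T" "Y = Fh c \<Lambda> h" by blast
    have "\<forall>k<length c. 0 < snd (c ! k) + \<Lambda> k h" using h(1) unfolding T_def by blast
    then have "Fh c \<Lambda> h \<in> reachable_set B0 m B \<and> det (Fh c \<Lambda> h) > 0"
      by (rule Fh_reach[OF real c(1)])
    then show "Y \<in> reachable_set B0 m B \<inter> GLp"
      using h(2) unfolding GLp_def by simp
  qed
  have "openin (top_of_set GLp) (interior (Fh c \<Lambda> ` T))"
    unfolding openin_open using interior_subset[of "Fh c \<Lambda> ` T"] sub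
    by (intro exI[of _ "interior (Fh c \<Lambda> ` T)"]) auto
  moreover have "interior (Fh c \<Lambda> ` T) \<subseteq> reachable_set B0 m B"
    using sub interior_subset[of "Fh c \<Lambda> ` T"] by auto
  ultimately show ?thesis unfolding accessible_def using ne by blast
qed

definition br :: "real^'n^'n \<Rightarrow> real^'n^'n \<Rightarrow> real^'n::finite^'n" where
  "br X Y = X ** Y - Y ** X"

lemma Emat_nth: "Emat a b $ i $ j = (if i = a \<and> j = b then 1 else 0)"
  unfolding Emat_def by simp

lemma Emat_left: "(Emat a b ** X) $ i $ j = (if i = a then X $ b $ j else 0)"
proof -
  have "(Emat a b ** X) $ i $ j = (\<Sum>k\<in>UNIV. (if i = a \<and> k = b then 1 else 0) * X $ k $ j)"
    unfolding matrix_matrix_mult_def Emat_def by simp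
  also have "\<dots> = (\<Sum>k\<in>UNIV. if k = b then (if i = a then X $ k $ j else 0) else 0)"
    by (rule sum.cong) auto
  also have "\<dots> = (if i = a then X $ b $ j else 0)" by simp
  finally show ?thesis .
qed
lemma Emat_right: "(X ** Emat a b) $ i $ j = (if j = b then X $ i $ a else 0)"
proof -
  have "(X ** Emat a b) $ i $ j = (\<Sum>k\<in>UNIV. X $ i $ k * (if k = a \<and> j = b then 1 else 0))"
    unfolding matrix_matrix_mult_def Emat_def by simp
  also have "\<dots> = (\<Sum>k\<in>UNIV. if k = a then (if j = b then X $ i $ k else 0) else 0)"
    by (rule sum.cong) auto
  also have "\<dots> = (if j = b then X $ i $ a else 0)" by simp
  finally show ?thesis .
qed

lemma Emat_mult: "Emat a b ** Emat c d = (if b = c then Emat a d else 0)"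
  by (simp add: vec_eq_iff Emat_left Emat_nth)

lemma Emat_inj: "Emat a b = Emat c d \<longleftrightarrow> a = c \<and> b = d"
  by (auto simp: vec_eq_iff Emat_nth)

lemma br_EE: "br (Emat a b) (Emat c d) = (if b = c then Emat a d else 0) - (if d = a then Emat c b else 0)"
  unfolding br_def by (simp add: Emat_mult)

lemma br_diag_nth:
  assumes "\<forall>r s. r \<noteq> s \<longrightarrow> H $ r $ s = 0"
  shows "br H X $ r $ s = (H $ r $ r - H $ s $ s) * X $ r $ s"
proof -
  have "(H ** X) $ r $ s = H $ r $ r * X $ r $ s"
    unfolding matrix_matrix_mult_def using assms
    by (simp, subst sum.remove[of _ r], auto intro!: sum.neutral)
  moreover have "(X ** H) $ r $ s = X $ r $ s * H $ s $ s"
    unfolding matrix_matrix_mult_def using assms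
    by (simp, subst sum.remove[of _ s], auto intro!: sum.neutral)
  ultimately show ?thesis unfolding br_def by (simp add: algebra_simps)
qed

lemma matrix_decomp: "X = (\<Sum>a\<in>UNIV. \<Sum>b\<in>UNIV. X $ a $ b *\<^sub>R Emat a b)"
proof -
  have "(\<Sum>a\<in>UNIV. \<Sum>b\<in>UNIV. X $ a $ b *\<^sub>R Emat a b) $ i $ j = X $ i $ j" for i j
  proof -
    have "(\<Sum>a\<in>UNIV. \<Sum>b\<in>UNIV. X $ a $ b *\<^sub>R Emat a b) $ i $ j = (\<Sum>a\<in>UNIV. \<Sum>b\<in>UNIV. X $ a $ b * Emat a b $ i $ j)"
      by simp
    also have "\<dots> = (\<Sum>a\<in>UNIV. if a = i then X $ i $ j else 0)"
      by (rule sum.cong) (auto simp: Emat_nth if_distrib cong: if_cong)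
    also have "\<dots> = X $ i $ j" by simp
    finally show ?thesis .
  qed
  then show ?thesis by (simp add: vec_eq_iff)
qed

lemma gl_span:
  fixes S :: "(real^'n::finite^'n) set"
  assumes S: "subspace S" and off: "\<And>a b. a \<noteq> b \<Longrightarrow> Emat a b \<in> S"
    and dd: "\<And>a b. Emat a a - Emat b b \<in> S"
    and T0: "T0 \<in> S" and tr: "(\<Sum>a\<in>UNIV. T0 $ a $ a) \<noteq> 0"
  shows "S = UNIV"
proof -
  define t where "t = (\<Sum>a\<in>UNIV. T0 $ a $ a)"
  have offs: "(\<Sum>a\<in>UNIV. \<Sum>b\<in>UNIV. (if a = b then 0 else X $ a $ b) *\<^sub>R Emat a b) \<in> S" for X
    by (intro subspace_sum[OF S] ballI) (auto intro: subspace_scale[OF S] off simp: subspace_0[OF S])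
  have diag_eq: "(\<Sum>a\<in>UNIV. \<Sum>b\<in>UNIV. X $ a $ b *\<^sub>R Emat a b)
      = (\<Sum>a\<in>UNIV. \<Sum>b\<in>UNIV. (if a = b then 0 else X $ a $ b) *\<^sub>R Emat a b) + (\<Sum>a\<in>UNIV. X $ a $ a *\<^sub>R Emat a a)" for X
  proof -
    have "(\<Sum>b\<in>UNIV. X $ a $ b *\<^sub>R Emat a b) = (\<Sum>b\<in>UNIV. (if a = b then 0 else X $ a $ b) *\<^sub>R Emat a b) + X $ a $ a *\<^sub>R Emat a a" for a
    proof -
      have "(\<Sum>b\<in>UNIV. X $ a $ b *\<^sub>R Emat a b) = (\<Sum>b\<in>UNIV. (if a = b then 0 else X $ a $ b) *\<^sub>R Emat a b + (if a = b then X $ a $ a *\<^sub>R Emat a a else 0))"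
        by (rule sum.cong) auto
      also have "\<dots> = (\<Sum>b\<in>UNIV. (if a = b then 0 else X $ a $ b) *\<^sub>R Emat a b) + X $ a $ a *\<^sub>R Emat a a"
        by (simp add: sum.distrib)
      finally show ?thesis .
    qed
    then show ?thesis by (simp add: sum.distrib)
  qed
  have D0: "(\<Sum>a\<in>UNIV. T0 $ a $ a *\<^sub>R Emat a a) \<in> S"
  proof -
    have "(\<Sum>a\<in>UNIV. T0 $ a $ a *\<^sub>R Emat a a) = T0 - (\<Sum>a\<in>UNIV. \<Sum>b\<in>UNIV. (if a = b then 0 else T0 $ a $ b) *\<^sub>R Emat a b)"
      using diag_eq[of T0] matrix_decomp[of T0] by (simp add: algebra_simps)
    then show ?thesis using T0 offs[of T0] by (simp add: subspace_diff[OF S])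
  qed
  have Ex: "Emat x x \<in> S" for x
  proof -
    have "(\<Sum>a\<in>UNIV. T0 $ a $ a *\<^sub>R Emat a a) = (\<Sum>a\<in>UNIV. T0 $ a $ a *\<^sub>R (Emat a a - Emat x x)) + t *\<^sub>R Emat x x"
      unfolding t_def by (simp add: scaleR_diff_right sum_subtractf scaleR_sum_left)
    then have "t *\<^sub>R Emat x x = (\<Sum>a\<in>UNIV. T0 $ a $ a *\<^sub>R Emat a a) - (\<Sum>a\<in>UNIV. T0 $ a $ a *\<^sub>R (Emat a a - Emat x x))"
      by simp
    moreover have "(\<Sum>a\<in>UNIV. T0 $ a $ a *\<^sub>R (Emat a a - Emat x x)) \<in> S"
      by (intro subspace_sum[OF S] ballI subspace_scale[OF S] dd)
    ultimately have "t *\<^sub>R Emat x x \<in> S" using D0 by (simp add: subspace_diff[OF S])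
    then have "(1/t) *\<^sub>R (t *\<^sub>R Emat x x) \<in> S" by (rule subspace_scale[OF S])
    then show ?thesis using tr unfolding t_def by simp
  qed
  have "X \<in> S" for X
  proof -
    have "(\<Sum>a\<in>UNIV. \<Sum>b\<in>UNIV. X $ a $ b *\<^sub>R Emat a b) \<in> S"
      by (intro subspace_sum[OF S] ballI subspace_scale[OF S]) (metis Ex off)
    then show ?thesis using matrix_decomp[of X] by simp
  qed
  then show ?thesis by blast
qed

lemma mm_add_rdistrib: "((A::real^'m::finite^'n::finite) + B) ** (C::real^'p::finite^'m) = A ** C + B ** C"
  by (simp add: matrix_matrix_mult_def vec_eq_iff sum.distrib distrib_right)

lemma br_add_right: "br H (X + Y) = br H X + br H Y"
  unfolding br_def by (simp add: matrix_add_ldistrib mm_add_rdistrib algebra_simps)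

lemma br_add_left: "br (X + Y) H = br X H + br Y H"
  unfolding br_def by (simp add: matrix_add_ldistrib mm_add_rdistrib algebra_simps)

lemma br_scale_right: "br H (r *\<^sub>R X) = r *\<^sub>R br H X"
  unfolding br_def by (simp add: matrix_scalar_ac scalar_matrix_assoc[symmetric] scaleR_diff_right)

lemma br_scale_left: "br (r *\<^sub>R X) H = r *\<^sub>R br X H"
  unfolding br_def by (simp add: matrix_scalar_ac scalar_matrix_assoc[symmetric] scaleR_diff_right)

lemma br_anti: "br X Y = - br Y X"
  unfolding br_def by simp

lemma br_diff_right: "br H (X - Y) = br H X - br H Y"
  using br_add_right[of H X "-Y"] br_scale_right[of H "-1" Y] by simp

definition diagonal :: "real^'n^'n \<Rightarrow> bool" where
  "diagonal H \<longleftrightarrow> (\<forall>r s. r \<noteq> s \<longrightarrow> H $ r $ s = 0)"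

lemma br_diag_E:
  assumes "diagonal H"
  shows "br H (Emat a b) = (H $ a $ a - H $ b $ b) *\<^sub>R Emat (a::'n::finite) b"
  using br_diag_nth[of H] assms unfolding diagonal_def
  by (auto simp: vec_eq_iff Emat_nth)

lemma diagonal_EE: "diagonal (Emat x x - Emat y y)" "diagonal (Emat x x)"
  unfolding diagonal_def by (auto simp: Emat_nth)

lemma EE_nth: "(Emat x x - Emat y y) $ r $ r = (if r = x then 1 else 0) - (if r = y then 1 else 0)"
  by (simp add: Emat_nth)

locale core =
  fixes L :: "(real^'n::finite^'n) set" and Pa Pb :: "('n \<times> 'n) set" and B0 :: "real^'n^'n" and v0 :: 'n
  assumes L_sub: "subspace L"
    and L_br: "\<And>X Y. X \<in> L \<Longrightarrow> Y \<in> L \<Longrightarrow> br X Y \<in> L"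
    and B0_L: "B0 \<in> L"
    and Pb_L: "\<And>a b. (a, b) \<in> Pb \<Longrightarrow> Emat a b \<in> L"
    and comp: "\<forall>v. card (weak_component Pb v) \<ge> 2 \<and> strongly_connected_set Pb (weak_component Pb v)"
    and usc: "strongly_connected_set (Pa \<union> Pb) UNIV"
    and loop: "\<exists>v. (v, v) \<in> Pa \<union> Pb"
    and B0_nth: "\<And>i j. B0 $ i $ j = (if (i, j) \<in> Pa then (if i = v0 \<and> j = v0 then 3 else 1) else 0)"
    and v0: "(\<exists>v. (v, v) \<in> Pa) \<Longrightarrow> (v0, v0) \<in> Pa"
begin

definition sim :: "'n \<Rightarrow> 'n \<Rightarrow> bool" where
  "sim x y \<longleftrightarrow> y \<in> weak_component Pb x"

lemma sim_refl[simp]: "sim x x"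
  unfolding sim_def weak_component_def by simp

lemma sim_sym: "sim x y \<Longrightarrow> sim y x"
proof -
  assume "sim x y"
  then have "(x, y) \<in> (Pb \<union> Pb\<inverse>)\<^sup>*" unfolding sim_def weak_component_def by simp
  then have "(y, x) \<in> ((Pb \<union> Pb\<inverse>)\<^sup>*)\<inverse>" by simp
  also have "((Pb \<union> Pb\<inverse>)\<^sup>*)\<inverse> = (Pb \<union> Pb\<inverse>)\<^sup>*"
    by (simp add: rtrancl_converse[symmetric] converse_Un) (subst Un_commute, rule refl)
  finally show "sim y x" unfolding sim_def weak_component_def by simp
qed

lemma sim_trans: "sim x y \<Longrightarrow> sim y z \<Longrightarrow> sim x z"
  unfolding sim_def weak_component_def by simp

lemma Pb_sim: "(a, b) \<in> Pb \<Longrightarrow> sim a b"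
  unfolding sim_def weak_component_def by auto

lemma wc_eq: "sim x y \<Longrightarrow> weak_component Pb x = weak_component Pb y"
  unfolding weak_component_def using sim_sym sim_trans unfolding sim_def weak_component_def by blast

lemma other: "\<exists>y. sim x y \<and> y \<noteq> x"
proof -
  have c2: "card (weak_component Pb x) \<ge> 2" using comp by blast
  have "\<not> weak_component Pb x \<subseteq> {x}"
  proof
    assume "weak_component Pb x \<subseteq> {x}"
    then have "card (weak_component Pb x) \<le> card {x}" by (rule card_mono[rotated]) simp
    then show False using c2 by simp
  qed
  then show ?thesis unfolding sim_def by blast
qed

lemma sim_path: "sim x y \<Longrightarrow> (x, y) \<in> Pb\<^sup>*"
proof -
  assume s: "sim x y"
  have "strongly_connected_set Pb (weak_component Pb x)" using comp by blast
  then have "(x, y) \<in> (Pb \<inter> (weak_component Pb x \<times> weak_component Pb x))\<^sup>*"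
    unfolding strongly_connected_set_def using s sim_refl unfolding sim_def by blast
  then show ?thesis using rtrancl_mono[of "Pb \<inter> _" Pb] by blast
qed

lemma stepA: "sim x y \<Longrightarrow> x \<noteq> y \<Longrightarrow> Emat x y \<in> L"
proof -
  assume "sim x y" "x \<noteq> y"
  have "(x, y) \<in> Pb\<^sup>*" by (rule sim_path) fact
  then show ?thesis using \<open>x \<noteq> y\<close>
  proof (induction rule: rtrancl_induct)
    case base then show ?case by simp
  next
    case (step z w)
    show ?case
    proof (cases "x = z")
      case True then show ?thesis using step Pb_L by simp
    next
      case False
      then have "Emat x z \<in> L" using step by simp
      then have "br (Emat x z) (Emat z w) \<in> L" using L_br Pb_L step by blast
      then show ?thesis using step.prems by (simp add: br_EE)
    qed
  qed
qed

lemma stepB: "sim x y \<Longrightarrow> Emat x x - Emat y y \<in> L"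
proof (cases "x = y")
  case True then show ?thesis using subspace_0[OF L_sub] by simp
next
  case False
  assume "sim x y"
  then have "br (Emat x y) (Emat y x) \<in> L" using L_br stepA sim_sym False by metis
  then show ?thesis using False by (simp add: br_EE)
qed

lemma sep:
  assumes H: "H \<in> L" "diagonal H" and Y: "Y \<in> L" "Y = \<alpha> *\<^sub>R Emat a b + \<beta> *\<^sub>R Emat c d"
    and w: "H $ a $ a - H $ b $ b \<noteq> H $ c $ c - H $ d $ d" and al: "\<alpha> \<noteq> 0"
  shows "Emat a b \<in> L"
proof -
  define w1 where "w1 = H $ a $ a - H $ b $ b"
  define w2 where "w2 = H $ c $ c - H $ d $ d"
  have "br H Y = (\<alpha> * w1) *\<^sub>R Emat a b + (\<beta> * w2) *\<^sub>R Emat c d"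
    unfolding Y(2) br_add_right br_scale_right br_diag_E[OF H(2)] w1_def w2_def by simp
  then have "br H Y - w2 *\<^sub>R Y = (\<alpha> * (w1 - w2)) *\<^sub>R Emat a b"
    unfolding Y(2) by (simp add: algebra_simps)
  moreover have "br H Y - w2 *\<^sub>R Y \<in> L"
    using L_br[OF H(1) Y(1)] Y(1) by (simp add: subspace_diff[OF L_sub] subspace_scale[OF L_sub])
  ultimately have "(\<alpha> * (w1 - w2)) *\<^sub>R Emat a b \<in> L" by simp
  then have "(1 / (\<alpha> * (w1 - w2))) *\<^sub>R ((\<alpha> * (w1 - w2)) *\<^sub>R Emat a b) \<in> L"
    by (rule subspace_scale[OF L_sub])
  then show ?thesis using al w unfolding w1_def w2_def by simp
qed

end

lemma sandwich:
  assumes "p \<noteq> c" "d \<noteq> a"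
  shows "br (Emat a p) (br (Emat c d) X) = - (X $ p $ c *\<^sub>R Emat a d + X $ d $ a *\<^sub>R Emat c p)"
  using assms by (auto simp: vec_eq_iff br_def Emat_left Emat_right Emat_nth)

lemma fwd_formula:
  assumes "x \<noteq> y" "y' \<noteq> u"
  shows "br (br (Emat u x) X) (Emat y y') = X $ x $ y *\<^sub>R Emat u y' + X $ y' $ u *\<^sub>R Emat y x"
  using assms by (auto simp: vec_eq_iff br_def Emat_left Emat_right Emat_nth)

lemma bwd_formula:
  assumes "z' \<noteq> a" "b \<noteq> z"
  shows "br (Emat z z') (br X (Emat a b)) = X $ z' $ a *\<^sub>R Emat z b + X $ b $ z *\<^sub>R Emat a z'"
  using assms by (auto simp: vec_eq_iff br_def Emat_left Emat_right Emat_nth)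

context core
begin

lemma projQ:
  assumes X: "X \<in> L" and s: "sim x y" and xy: "x \<noteq> y"
  shows "\<exists>Y\<in>L. \<forall>r s. Y $ r $ s = (if (Emat x x - Emat y y) $ r $ r = (Emat x x - Emat y y) $ s $ s then X $ r $ s else 0)"
proof -
  define H where "H = Emat x x - Emat y y"
  have HL: "H \<in> L" unfolding H_def by (rule stepB[OF s])
  have Hd: "diagonal H" unfolding H_def by (rule diagonal_EE)
  define h where "h = (\<lambda>r. H $ r $ r)"
  have brn: "br H Z $ r $ s = (h r - h s) * Z $ r $ s" for Z r s
    using br_diag_nth[of H Z r s] Hd unfolding diagonal_def h_def by blast
  define Y where "Y = (1/4) *\<^sub>R (br H (br H (br H (br H X))) - 5 *\<^sub>R br H (br H X) + 4 *\<^sub>R X)"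
  have YL: "Y \<in> L" unfolding Y_def
    using L_br[OF HL] X
    by (intro subspace_scale[OF L_sub] subspace_add[OF L_sub] subspace_diff[OF L_sub]) (auto intro: subspace_scale[OF L_sub])
  have Yn: "Y $ r $ s = (1/4) * ((h r - h s)^4 - 5 * (h r - h s)^2 + 4) * X $ r $ s" for r s
    unfolding Y_def by (simp add: brn algebra_simps power2_eq_square power4_eq_xxxx)
  have hv: "h r = (if r = x then 1 else if r = y then -1 else 0)" for r
    unfolding h_def H_def using xy by (auto simp: Emat_nth)
  have "Y $ r $ s = (if h r = h s then X $ r $ s else 0)" for r s
    unfolding Yn using xy by (auto simp: hv)
  then show ?thesis using YL unfolding h_def H_def by blast
qed

lemma diag_in:
  assumes X: "X \<in> L"
  shows "(\<Sum>a\<in>UNIV. X $ a $ a *\<^sub>R Emat a a) \<in> L"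
proof -
  have ind: "finite F \<Longrightarrow> \<exists>Y\<in>L. (\<forall>r. Y $ r $ r = X $ r $ r) \<and> (\<forall>r s. r \<noteq> s \<and> (r \<in> F \<or> s \<in> F) \<longrightarrow> Y $ r $ s = 0)" for F
  proof (induction F rule: finite_induct)
    case empty show ?case using X by (intro bexI[of _ X]) auto
  next
    case (insert x F)
    then obtain Y where Y: "Y \<in> L" "\<forall>r. Y $ r $ r = X $ r $ r" "\<forall>r s. r \<noteq> s \<and> (r \<in> F \<or> s \<in> F) \<longrightarrow> Y $ r $ s = 0"
      by blast
    obtain y where y: "sim x y" "y \<noteq> x" using other by blast
    have xy: "x \<noteq> y" using y(2) by simp
    obtain Y' where Y': "Y' \<in> L" "\<forall>r s. Y' $ r $ s = (if (Emat x x - Emat y y) $ r $ r = (Emat x x - Emat y y) $ s $ s then Y $ r $ s else 0)"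
      using projQ[OF Y(1) y(1) xy] by blast
    have hv: "(Emat x x - Emat y y) $ r $ r = (if r = x then 1 else if r = y then -1 else 0)" for r
      using xy by (simp add: Emat_nth)
    have Y'n: "Y' $ r $ s = (if (if r = x then 1 else if r = y then -1 else (0::real)) = (if s = x then 1 else if s = y then -1 else 0) then Y $ r $ s else 0)" for r s
      using Y'(2) unfolding hv by blast
    have "\<forall>r. Y' $ r $ r = X $ r $ r" using Y'n Y(2) by simp
    moreover have "\<forall>r s. r \<noteq> s \<and> (r \<in> insert x F \<or> s \<in> insert x F) \<longrightarrow> Y' $ r $ s = 0"
    proof (intro allI impI)
      fix r s assume rs: "r \<noteq> s \<and> (r \<in> insert x F \<or> s \<in> insert x F)"
      show "Y' $ r $ s = 0"
      proof (cases "r \<in> F \<or> s \<in> F")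
        case True then show ?thesis using Y'n[of r s] Y(3) rs by simp
      next
        case False
        then have "r = x \<or> s = x" using rs by auto
        then show ?thesis using Y'n[of r s] rs xy by auto
      qed
    qed
    ultimately show ?case using Y'(1) by (intro bexI[of _ Y']) auto
  qed
  obtain Y where Y: "Y \<in> L" "\<forall>r. Y $ r $ r = X $ r $ r" "\<forall>r s. r \<noteq> s \<and> (r \<in> UNIV \<or> s \<in> UNIV) \<longrightarrow> Y $ r $ s = 0"
    using ind[of UNIV] by auto
  have "Y = (\<Sum>a\<in>UNIV. X $ a $ a *\<^sub>R Emat a a)"
  proof -
    have "(\<Sum>a\<in>UNIV. X $ a $ a *\<^sub>R Emat a a) $ r $ s = Y $ r $ s" for r s
    proof -
      have "(\<Sum>a\<in>UNIV. X $ a $ a *\<^sub>R Emat a a) $ r $ s = (\<Sum>a\<in>UNIV. if a = r then (if r = s then X $ r $ r else 0) else 0)"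
        unfolding sum_component vector_scaleR_component by (rule sum.cong) (auto simp: Emat_nth)
      also have "\<dots> = Y $ r $ s" using Y by auto
      finally show ?thesis .
    qed
    then show ?thesis by (simp add: vec_eq_iff)
  qed
  then show ?thesis using Y(1) by simp
qed

definition ext :: "'n \<Rightarrow> 'n \<Rightarrow> bool" where
  "ext x y \<longleftrightarrow> (\<forall>x' y'. sim x x' \<longrightarrow> sim y y' \<longrightarrow> Emat x' y' \<in> L)"

lemma ext_of:
  assumes ns: "\<not> sim x y" and E: "Emat x y \<in> L"
  shows "ext x y"
  unfolding ext_def
proof (intro allI impI)
  fix x' y' assume x': "sim x x'" and y': "sim y y'"
  have E1: "Emat x' y \<in> L"
  proof (cases "x' = x")
    case True then show ?thesis using E by simp
  next
    case False
    have "br (Emat x' x) (Emat x y) \<in> L" using L_br stepA[OF sim_sym[OF x'] False] E by blast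
    moreover have "y \<noteq> x'" using ns x' by auto
    ultimately show ?thesis by (simp add: br_EE)
  qed
  show "Emat x' y' \<in> L"
  proof (cases "y' = y")
    case True then show ?thesis using E1 by simp
  next
    case False
    have "br (Emat x' y) (Emat y y') \<in> L" using L_br stepA[OF y'] False E1 by metis
    moreover have "y' \<noteq> x'" using ns x' y' sim_sym sim_trans by metis
    ultimately show ?thesis by (simp add: br_EE)
  qed
qed

lemma ext_cong: "ext x y \<Longrightarrow> sim x x1 \<Longrightarrow> sim y y1 \<Longrightarrow> ext x1 y1"
  unfolding ext_def using sim_trans by blast

lemma ext_E: "ext x y \<Longrightarrow> Emat x y \<in> L"
  unfolding ext_def by simp

lemma ext_trans:
  assumes "ext x y" "ext y z" "\<not> sim x z"
  shows "ext x z"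
proof -
  have "br (Emat x y) (Emat y z) \<in> L" using assms ext_E L_br by blast
  moreover have "z \<noteq> x" using assms(3) by auto
  ultimately show ?thesis using assms(3) ext_of by (simp add: br_EE)
qed

lemma nsim_ne: "\<not> sim a b \<Longrightarrow> sim a a' \<Longrightarrow> sim b b' \<Longrightarrow> a' \<noteq> b'"
  using sim_sym sim_trans by blast

lemma nsim_cong: "\<not> sim a b \<Longrightarrow> sim a a' \<Longrightarrow> sim b b' \<Longrightarrow> \<not> sim a' b'"
  using sim_sym sim_trans by blast

lemma B0_arc: "(x, y) \<in> Pa \<Longrightarrow> B0 $ x $ y \<noteq> 0"
  by (simp add: B0_nth)

lemma P1:
  assumes e: "ext a b" and arc: "(x, y) \<in> Pa" and xb: "sim b x" and ya: "\<not> sim a y"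
    and yx: "\<not> sim x y" and ab: "\<not> sim a b"
  shows "ext a y"
proof -
  obtain a' where a': "sim a a'" "a' \<noteq> a" using other by blast
  obtain y' where y': "sim y y'" "y' \<noteq> y" using other by blast
  have Eax: "Emat a x \<in> L" using e xb unfolding ext_def by simp
  have y'a: "y' \<noteq> a" using nsim_ne[OF ya sim_refl y'(1)] by simp
  have xy: "x \<noteq> y" using yx by auto
  have Z: "br (br (Emat a x) B0) (Emat y y') \<in> L"
    using L_br[OF L_br[OF Eax B0_L] stepA[OF y'(1) y'(2)[symmetric]]] .
  have Zf: "br (br (Emat a x) B0) (Emat y y') = B0 $ x $ y *\<^sub>R Emat a y' + B0 $ y' $ a *\<^sub>R Emat y x"
    by (rule fwd_formula[OF xy y'a])
  have HL: "Emat a a - Emat a' a' \<in> L" by (rule stepB[OF a'(1)])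
  have xa: "\<not> sim a x" using nsim_cong[OF ab sim_refl xb] .
  have ne: "y' \<noteq> a'" "y \<noteq> a" "y \<noteq> a'" "x \<noteq> a" "x \<noteq> a'"
    using nsim_ne[OF ya a'(1) y'(1)] nsim_ne[OF ya sim_refl sim_refl] nsim_ne[OF ya a'(1) sim_refl]
      nsim_ne[OF xa sim_refl sim_refl] nsim_ne[OF xa a'(1) sim_refl] by auto
  have w: "(Emat a a - Emat a' a') $ a $ a - (Emat a a - Emat a' a') $ y' $ y' \<noteq>
      (Emat a a - Emat a' a') $ y $ y - (Emat a a - Emat a' a') $ x $ x"
    using ne y'a a'(2) by (simp add: Emat_nth)
  have "Emat a y' \<in> L"
    by (rule sep[OF HL diagonal_EE(1) Z Zf w B0_arc[OF arc]])
  then have "ext a y'" by (rule ext_of[rotated]) (rule nsim_cong[OF ya sim_refl y'(1)])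
  then show ?thesis using ext_cong[OF _ sim_refl sim_sym[OF y'(1)]] by blast
qed

end

context core
begin

lemma P2:
  assumes e: "ext a b" and arc: "(z', a1) \<in> Pa" and aa1: "sim a a1" and za: "\<not> sim z' a"
    and zb: "\<not> sim z' b" and ab: "\<not> sim a b"
  shows "ext z' b"
proof -
  obtain z where z: "sim z' z" "z \<noteq> z'" using other by blast
  obtain b' where b': "sim b b'" "b' \<noteq> b" using other by blast
  have Eab: "Emat a1 b \<in> L" using e aa1 unfolding ext_def by simp
  have Z: "br (Emat z z') (br B0 (Emat a1 b)) \<in> L"
    using L_br[OF stepA[OF sim_sym[OF z(1)] z(2)] L_br[OF B0_L Eab]] .
  have n1: "z' \<noteq> a1" using nsim_ne[OF za sim_refl aa1] .
  have n2: "b \<noteq> z" using nsim_ne[OF zb z(1) sim_refl] by simp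
  have Zf: "br (Emat z z') (br B0 (Emat a1 b)) = B0 $ z' $ a1 *\<^sub>R Emat z b + B0 $ b $ z *\<^sub>R Emat a1 z'"
    by (rule bwd_formula[OF n1 n2])
  have HL: "Emat b b - Emat b' b' \<in> L" by (rule stepB[OF b'(1)])
  have a1b: "\<not> sim a1 b" using nsim_cong[OF ab aa1 sim_refl] .
  have ne: "z \<noteq> b" "z \<noteq> b'" "a1 \<noteq> b" "a1 \<noteq> b'" "z' \<noteq> b" "z' \<noteq> b'"
    using nsim_ne[OF zb z(1) sim_refl] nsim_ne[OF zb z(1) b'(1)] nsim_ne[OF a1b sim_refl sim_refl]
      nsim_ne[OF a1b sim_refl b'(1)] nsim_ne[OF zb sim_refl sim_refl] nsim_ne[OF zb sim_refl b'(1)] by auto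
  have w: "(Emat b b - Emat b' b') $ z $ z - (Emat b b - Emat b' b') $ b $ b \<noteq>
      (Emat b b - Emat b' b') $ a1 $ a1 - (Emat b b - Emat b' b') $ z' $ z'"
    using ne b'(2) by (simp add: Emat_nth)
  have "Emat z b \<in> L"
    by (rule sep[OF HL diagonal_EE(1) Z Zf w B0_arc[OF arc]])
  then have "ext z b" by (rule ext_of[rotated]) (rule nsim_cong[OF zb z(1) sim_refl])
  then show ?thesis using ext_cong[OF _ sim_sym[OF z(1)] sim_refl] by blast
qed

lemma P3:
  assumes e: "ext b a" and arc: "(p, c) \<in> Pa" and ap: "sim a p" and bc: "sim b c" and ab: "\<not> sim a b"
  shows "ext a b"
proof -
  obtain a' where a': "sim p a'" "a' \<noteq> p" using other by blast
  obtain d where d: "sim c d" "d \<noteq> c" using other by blast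
  have pc: "\<not> sim p c" using nsim_cong[OF ab ap bc] .
  have n1: "p \<noteq> c" using pc by auto
  have n2: "d \<noteq> a'" using nsim_ne[OF pc a'(1) d(1)] by simp
  have Y: "br (Emat a' p) (br (Emat c d) B0) \<in> L"
    using L_br[OF stepA[OF sim_sym[OF a'(1)] a'(2)] L_br[OF stepA[OF d(1) d(2)[symmetric]] B0_L]] .
  have Yf: "br (Emat a' p) (br (Emat c d) B0) = - (B0 $ p $ c *\<^sub>R Emat a' d + B0 $ d $ a' *\<^sub>R Emat c p)"
    by (rule sandwich[OF n1 n2])
  have Ecp: "Emat c p \<in> L" using e bc ap unfolding ext_def by simp
  have "B0 $ p $ c *\<^sub>R Emat a' d = - br (Emat a' p) (br (Emat c d) B0) - B0 $ d $ a' *\<^sub>R Emat c p"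
    unfolding Yf by simp
  also have "\<dots> \<in> L"
    using Y Ecp by (intro subspace_diff[OF L_sub] subspace_neg[OF L_sub] subspace_scale[OF L_sub])
  finally have "B0 $ p $ c *\<^sub>R Emat a' d \<in> L" .
  then have "(1 / B0 $ p $ c) *\<^sub>R (B0 $ p $ c *\<^sub>R Emat a' d) \<in> L" by (rule subspace_scale[OF L_sub])
  then have "Emat a' d \<in> L" using B0_arc[OF arc] by simp
  then have "ext a' d" by (rule ext_of[rotated]) (rule nsim_cong[OF pc a'(1) d(1)])
  then show ?thesis
    using ext_cong[OF _ sim_trans[OF sim_sym[OF a'(1)] sim_sym[OF ap]] sim_trans[OF sim_sym[OF d(1)] sim_sym[OF bc]]] by blast
qed

lemma seed:
  assumes arc: "(p, c) \<in> Pa" and pc: "\<not> sim p c" and H: "H \<in> L" "diagonal H"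
    and p': "sim p p'" "p' \<noteq> p" and c': "sim c c'" "c' \<noteq> c"
    and w: "H $ p' $ p' - H $ c' $ c' \<noteq> H $ c $ c - H $ p $ p"
  shows "ext p c"
proof -
  have n1: "p \<noteq> c" using pc by auto
  have n2: "c' \<noteq> p'" using nsim_ne[OF pc p'(1) c'(1)] by simp
  have Y: "br (Emat p' p) (br (Emat c c') B0) \<in> L"
    using L_br[OF stepA[OF sim_sym[OF p'(1)] p'(2)] L_br[OF stepA[OF c'(1) c'(2)[symmetric]] B0_L]] .
  have Yf: "br (Emat p' p) (br (Emat c c') B0) = (- B0 $ p $ c) *\<^sub>R Emat p' c' + (- B0 $ c' $ p') *\<^sub>R Emat c p"
    using sandwich[OF n1 n2, where X=B0] by simp
  have "Emat p' c' \<in> L"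
    by (rule sep[OF H Y Yf w]) (use B0_arc[OF arc] in simp)
  then have "ext p' c'" by (rule ext_of[rotated]) (rule nsim_cong[OF pc p'(1) c'(1)])
  then show ?thesis using ext_cong[OF _ sim_sym[OF p'(1)] sim_sym[OF c'(1)]] by blast
qed

end

lemma diagsum_nth: "(\<Sum>a\<in>UNIV. f a *\<^sub>R Emat a a) $ r $ s = (if r = s then f r else (0::real))"
proof -
  have "(\<Sum>a\<in>UNIV. f a *\<^sub>R Emat a a) $ r $ s = (\<Sum>a\<in>UNIV. if a = r then (if r = s then f r else 0) else 0)"
    unfolding sum_component vector_scaleR_component by (rule sum.cong) (auto simp: Emat_nth)
  then show ?thesis by simp
qed

context core
begin

lemma Ustar: "(v, w) \<in> (Pa \<union> Pb)\<^sup>*"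
proof -
  have "(v, w) \<in> ((Pa \<union> Pb) \<inter> (UNIV \<times> UNIV))\<^sup>*" using usc unfolding strongly_connected_set_def by blast
  then show ?thesis by simp
qed

lemma arc_cross: "(y, z) \<in> Pa \<union> Pb \<Longrightarrow> \<not> sim y z \<Longrightarrow> (y, z) \<in> Pa"
  using Pb_sim by blast

lemma cross_out:
  assumes "(x, y) \<in> (Pa \<union> Pb)\<^sup>*" "\<not> sim x y"
  shows "\<exists>p c. (p, c) \<in> Pa \<and> sim x p \<and> \<not> sim p c"
  using assms
proof (induction rule: rtrancl_induct)
  case base then show ?case by simp
next
  case (step y z)
  show ?case
  proof (cases "sim x y")
    case True
    then have "\<not> sim y z" using step.prems sim_trans by blast
    then have "(y, z) \<in> Pa" using arc_cross step.hyps(2) by blast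
    then show ?thesis using True \<open>\<not> sim y z\<close> by blast
  next
    case False then show ?thesis using step.IH by blast
  qed
qed

lemma mutual:
  assumes e0: "ext p0 c0" and n0: "\<not> sim p0 c0"
  shows "\<exists>m. \<not> sim m p0 \<and> ext p0 m \<and> ext m p0"
proof -
  let ?M = "\<exists>m. \<not> sim m p0 \<and> ext p0 m \<and> ext m p0"
  have gen: "(c0, y0) \<in> (Pa \<union> Pb)\<^sup>* \<Longrightarrow> ?M \<or> (\<not> sim p0 y0 \<and> ext p0 y0)" for y0
  proof (induction rule: rtrancl_induct)
    case base show ?case using e0 n0 by (intro disjI2 conjI)
  next
    case (step y z)
    show ?case
    proof (cases ?M)
      case True then show ?thesis by (rule disjI1)
    next
      case False
      then have y: "\<not> sim p0 y \<and> ext p0 y" using step.IH by (elim disjE) simp_all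
      then have y1: "\<not> sim p0 y" and y2: "ext p0 y" by simp_all
      show ?thesis
      proof (cases "sim y z")
        case True
        have "\<not> sim p0 z" using nsim_cong[OF y1 sim_refl True] .
        moreover have "ext p0 z" using ext_cong[OF y2 sim_refl True] .
        ultimately show ?thesis by (intro disjI2 conjI)
      next
        case yz: False
        have arc: "(y, z) \<in> Pa" by (rule arc_cross[OF step.hyps(2) yz])
        show ?thesis
        proof (cases "sim p0 z")
          case False
          have "ext p0 z" by (rule P1[OF y2 arc sim_refl False yz y1])
          then show ?thesis using False by (intro disjI2 conjI)
        next
          case True
          have yp: "\<not> sim y p0" using y1 sim_sym by blast
          have "ext y p0" by (rule P3[OF y2 arc sim_refl True yp])
          then have ?M using yp y2 by blast
          then show ?thesis by (rule disjI1)
        qed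
      qed
    qed
  qed
  have "?M \<or> (\<not> sim p0 p0 \<and> ext p0 p0)" by (rule gen[OF Ustar])
  then show ?thesis by simp
qed

lemma forward:
  assumes m: "\<not> sim m p0" "ext p0 m" "ext m p0"
  shows "(p0, y) \<in> (Pa \<union> Pb)\<^sup>* \<Longrightarrow> sim p0 y \<or> ext p0 y"
proof (induction rule: rtrancl_induct)
  case base then show ?case by simp
next
  case (step y z)
  show ?case
  proof (cases "sim p0 z")
    case True then show ?thesis by (rule disjI1)
  next
    case zp: False
    show ?thesis
    proof (cases "sim y z")
      case True
      have "\<not> sim p0 y" using zp True sim_trans by blast
      then have "ext p0 y" using step.IH by simp
      then show ?thesis using ext_cong[OF _ sim_refl True] by blast
    next
      case yz: False
      have arc: "(y, z) \<in> Pa" by (rule arc_cross[OF step.hyps(2) yz])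
      show ?thesis
      proof (cases "sim p0 y")
        case False
        then have "ext p0 y" using step.IH by simp
        have "ext p0 z" by (rule P1[OF \<open>ext p0 y\<close> arc sim_refl zp yz False])
        then show ?thesis by (rule disjI2)
      next
        case True
        show ?thesis
        proof (cases "sim m z")
          case True
          have "ext p0 z" using ext_cong[OF m(2) sim_refl True] .
          then show ?thesis by (rule disjI2)
        next
          case False
          have mp: "\<not> sim m p0" using m(1) .
          have mz: "ext m z"
            by (rule P1[OF m(3) arc \<open>sim p0 y\<close> False yz mp])
          have "ext p0 z" by (rule ext_trans[OF m(2) mz zp])
          then show ?thesis by (rule disjI2)
        qed
      qed
    qed
  qed
qed

lemma backward:
  assumes m: "\<not> sim m p0" "ext p0 m" "ext m p0"
  shows "(z, p0) \<in> (Pa \<union> Pb)\<^sup>* \<Longrightarrow> sim z p0 \<or> ext z p0"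
proof (induction rule: converse_rtrancl_induct)
  case base then show ?case by simp
next
  case (step z y)
  show ?case
  proof (cases "sim z p0")
    case True then show ?thesis by (rule disjI1)
  next
    case zp: False
    show ?thesis
    proof (cases "sim z y")
      case True
      have "\<not> sim y p0" using zp True sim_trans by blast
      then have "ext y p0" using step.IH by simp
      then show ?thesis using ext_cong[OF _ sim_sym[OF True] sim_refl] by blast
    next
      case zy: False
      have arc: "(z, y) \<in> Pa" by (rule arc_cross[OF step.hyps(1) zy])
      have zy': "\<not> sim z y" using zy .
      show ?thesis
      proof (cases "sim y p0")
        case False
        then have "ext y p0" using step.IH by simp
        have "ext z p0" by (rule P2[OF \<open>ext y p0\<close> arc sim_refl zy' zp False])
        then show ?thesis by (rule disjI2)
      next
        case True
        show ?thesis
        proof (cases "sim z m")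
          case True
          have "ext z p0" using ext_cong[OF m(3) sim_sym[OF True] sim_refl] .
          then show ?thesis by (rule disjI2)
        next
          case False
          have p0y: "sim p0 y" using sim_sym[OF True] .
          have pm: "\<not> sim p0 m" using m(1) sim_sym by blast
          have zp0: "\<not> sim z p0" using zp .
          have zm: "ext z m"
            by (rule P2[OF m(2) arc p0y zp0 False pm])
          have "ext z p0" by (rule ext_trans[OF zm m(3) zp])
          then show ?thesis by (rule disjI2)
        qed
      qed
    qed
  qed
qed

lemma all_cross:
  assumes s: "(p0, c0) \<in> Pa" "\<not> sim p0 c0" "ext p0 c0"
    and xy: "\<not> sim x y"
  shows "Emat x y \<in> L"
proof -
  obtain m where m: "\<not> sim m p0" "ext p0 m" "ext m p0" using mutual[OF s(3) s(2)] by blast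
  have f: "sim p0 y \<or> ext p0 y" by (rule forward[OF m Ustar])
  have b: "sim x p0 \<or> ext x p0" by (rule backward[OF m Ustar])
  show "Emat x y \<in> L"
  proof (cases "sim x p0")
    case True
    then have "\<not> sim p0 y" using xy sim_trans by blast
    then have "ext p0 y" using f by simp
    then have "ext x y" using ext_cong[OF _ sim_sym[OF True] sim_refl] by blast
    then show ?thesis by (rule ext_E)
  next
    case False
    then have xp: "ext x p0" using b by simp
    show ?thesis
    proof (cases "sim p0 y")
      case True
      have "ext x y" using ext_cong[OF xp sim_refl True] .
      then show ?thesis by (rule ext_E)
    next
      case False
      then have "ext p0 y" using f by simp
      have "ext x y" by (rule ext_trans[OF xp \<open>ext p0 y\<close> xy])
      then show ?thesis by (rule ext_E)
    qed
  qed
qed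

end

context core
begin

lemma anchor: "\<exists>H v. H \<in> L \<and> diagonal H \<and> (\<forall>a. 0 \<le> H $ a $ a) \<and> H $ v $ v = 3 \<and> (\<forall>a. a \<noteq> v \<longrightarrow> H $ a $ a \<le> 1)"
proof (cases "\<exists>v. (v, v) \<in> Pb")
  case True
  then obtain v where v: "(v, v) \<in> Pb" by blast
  have "3 *\<^sub>R Emat v v \<in> L" using Pb_L[OF v] by (rule subspace_scale[OF L_sub])
  moreover have "diagonal (3 *\<^sub>R Emat v v)" unfolding diagonal_def by (simp add: Emat_nth)
  ultimately show ?thesis by (intro exI[of _ "3 *\<^sub>R Emat v v"] exI[of _ v]) (auto simp: Emat_nth)
next
  case False
  then have "\<exists>v. (v, v) \<in> Pa" using loop by blast
  then have vv: "(v0, v0) \<in> Pa" by (rule v0)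
  define H where "H = (\<Sum>a\<in>UNIV. B0 $ a $ a *\<^sub>R Emat a a)"
  have "H \<in> L" unfolding H_def by (rule diag_in[OF B0_L])
  moreover have "diagonal H" unfolding diagonal_def H_def diagsum_nth by simp
  moreover have "H $ a $ a = B0 $ a $ a" for a unfolding H_def diagsum_nth by simp
  ultimately show ?thesis using vv by (intro exI[of _ H] exI[of _ v0]) (auto simp: B0_nth)
qed

lemma big3:
  assumes "card (weak_component Pb x) \<noteq> 2" "sim x x'" "x' \<noteq> x"
  shows "\<exists>e. sim x e \<and> e \<noteq> x \<and> e \<noteq> x'"
proof -
  have c2: "card (weak_component Pb x) \<ge> 2" using comp by blast
  have "\<not> weak_component Pb x \<subseteq> {x, x'}"
  proof
    assume "weak_component Pb x \<subseteq> {x, x'}"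
    then have "card (weak_component Pb x) \<le> card {x, x'}" by (rule card_mono[rotated]) simp
    then show False using c2 assms(1) by (simp add: card_insert_if split: if_splits)
  qed
  then show ?thesis unfolding sim_def by blast
qed

lemma two:
  assumes "card (weak_component Pb x) = 2" "sim x y" "y \<noteq> x"
  shows "weak_component Pb x = {x, y}"
proof -
  have "{x, y} \<subseteq> weak_component Pb x" using assms(2) sim_refl unfolding sim_def by blast
  moreover have "card {x, y} = card (weak_component Pb x)" using assms by simp
  ultimately show ?thesis by (intro card_subset_eq[symmetric]) auto
qed

lemma seed_exists:
  assumes "\<exists>x y. \<not> sim x y"
  shows "\<exists>p c. (p, c) \<in> Pa \<and> \<not> sim p c \<and> ext p c"
proof (rule ccontr)
  assume NS: "\<not> (\<exists>p c. (p, c) \<in> Pa \<and> \<not> sim p c \<and> ext p c)"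
  obtain H v where H: "H \<in> L" "diagonal H" "\<forall>a. 0 \<le> H $ a $ a" "H $ v $ v = 3" "\<forall>a. a \<noteq> v \<longrightarrow> H $ a $ a \<le> 1"
    using anchor by blast
  define S where "S = (\<lambda>x. \<Sum>z\<in>weak_component Pb x. H $ z $ z)"
  have cr: "card (weak_component Pb p) = 2 \<and> card (weak_component Pb c) = 2 \<and> S p = S c"
    if arc: "(p, c) \<in> Pa" and pc: "\<not> sim p c" for p c
  proof -
    obtain p' where p': "sim p p'" "p' \<noteq> p" using other by blast
    obtain c' where c': "sim c c'" "c' \<noteq> c" using other by blast
    have ne: "c \<noteq> p" "c \<noteq> p'" "c' \<noteq> p" "c' \<noteq> p'"
      using nsim_ne[OF pc sim_refl sim_refl] nsim_ne[OF pc p'(1) sim_refl]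
        nsim_ne[OF pc sim_refl c'(1)] nsim_ne[OF pc p'(1) c'(1)] by auto
    have cp: "card (weak_component Pb p) = 2"
    proof (rule ccontr)
      assume "card (weak_component Pb p) \<noteq> 2"
      then obtain e where e: "sim p e" "e \<noteq> p" "e \<noteq> p'" using big3 p' by blast
      have neE: "c \<noteq> e" "c' \<noteq> e" using nsim_ne[OF pc e(1) sim_refl] nsim_ne[OF pc e(1) c'(1)] by auto
      have HL: "Emat p' p' - Emat e e \<in> L" by (rule stepB) (use p'(1) e(1) sim_sym sim_trans in blast)
      have w: "(Emat p' p' - Emat e e) $ p' $ p' - (Emat p' p' - Emat e e) $ c' $ c' \<noteq>
          (Emat p' p' - Emat e e) $ c $ c - (Emat p' p' - Emat e e) $ p $ p"
        using ne neE e p' by (simp add: Emat_nth)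
      have "ext p c" by (rule seed[OF arc pc HL diagonal_EE(1) p' c' w])
      then show False using NS arc pc by blast
    qed
    have cc: "card (weak_component Pb c) = 2"
    proof (rule ccontr)
      assume "card (weak_component Pb c) \<noteq> 2"
      then obtain e where e: "sim c e" "e \<noteq> c" "e \<noteq> c'" using big3 c' by blast
      have neE: "p \<noteq> e" "p' \<noteq> e" using nsim_ne[OF pc sim_refl e(1)] nsim_ne[OF pc p'(1) e(1)] by auto
      have HL: "Emat c' c' - Emat e e \<in> L" by (rule stepB) (use c'(1) e(1) sim_sym sim_trans in blast)
      have w: "(Emat c' c' - Emat e e) $ p' $ p' - (Emat c' c' - Emat e e) $ c' $ c' \<noteq>
          (Emat c' c' - Emat e e) $ c $ c - (Emat c' c' - Emat e e) $ p $ p"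
        using ne neE e c' by (simp add: Emat_nth)
      have "ext p c" by (rule seed[OF arc pc HL diagonal_EE(1) p' c' w])
      then show False using NS arc pc by blast
    qed
    have Sp: "S p = H $ p $ p + H $ p' $ p'" unfolding S_def two[OF cp p'] using p'(2) by simp
    have Sc: "S c = H $ c $ c + H $ c' $ c'" unfolding S_def two[OF cc c'] using c'(2) by simp
    have "S p = S c"
    proof (rule ccontr)
      assume "S p \<noteq> S c"
      then have w: "H $ p' $ p' - H $ c' $ c' \<noteq> H $ c $ c - H $ p $ p" unfolding Sp Sc by argo
      have "ext p c" by (rule seed[OF arc pc H(1,2) p' c' w])
      then show False using NS arc pc by blast
    qed
    then show ?thesis using cp cc by blast
  qed
  have Sall: "(v, y) \<in> (Pa \<union> Pb)\<^sup>* \<Longrightarrow> S y = S v" for y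
  proof (induction rule: rtrancl_induct)
    case base then show ?case by simp
  next
    case (step y z)
    show ?case
    proof (cases "sim y z")
      case True then show ?thesis using step.IH wc_eq[OF True] unfolding S_def by simp
    next
      case False
      have "(y, z) \<in> Pa" by (rule arc_cross[OF step.hyps(2) False])
      then show ?thesis using cr[OF _ False] step.IH by simp
    qed
  qed
  obtain x where x: "\<not> sim v x"
    using assms sim_sym sim_trans by blast
  have cv: "card (weak_component Pb v) = 2"
  proof -
    obtain p c where "(p, c) \<in> Pa" "sim v p" "\<not> sim p c" using cross_out[OF Ustar x] by blast
    then show ?thesis using cr wc_eq by metis
  qed
  have xv: "\<not> sim x v" using x sim_sym by blast
  have cx: "card (weak_component Pb x) = 2"
  proof -
    obtain p c where "(p, c) \<in> Pa" "sim x p" "\<not> sim p c" using cross_out[OF Ustar xv] by blast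
    then show ?thesis using cr wc_eq by metis
  qed
  obtain v' where v': "sim v v'" "v' \<noteq> v" using other by blast
  obtain x' where x': "sim x x'" "x' \<noteq> x" using other by blast
  have Sv: "S v = H $ v $ v + H $ v' $ v'" unfolding S_def two[OF cv v'] using v'(2) by simp
  have Sx: "S x = H $ x $ x + H $ x' $ x'" unfolding S_def two[OF cx x'] using x'(2) by simp
  have "x \<noteq> v" "x' \<noteq> v" using nsim_ne[OF xv sim_refl sim_refl] nsim_ne[OF xv x'(1) sim_refl] by auto
  then have "S x \<le> 2" unfolding Sx using H(5) by (smt (verit))
  moreover have "S v \<ge> 3" unfolding Sv using H(3,4) by (smt (verit))
  moreover have "S x = S v" by (rule Sall[OF Ustar])
  ultimately show False by simp
qed

lemma core_full: "L = UNIV"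
proof -
  have off: "Emat x y \<in> L" if "x \<noteq> y" for x y
  proof (cases "sim x y")
    case True then show ?thesis using stepA that by blast
  next
    case False
    then obtain p c where "(p, c) \<in> Pa" "\<not> sim p c" "ext p c" using seed_exists by blast
    then show ?thesis using all_cross False by blast
  qed
  have dd: "Emat x x - Emat y y \<in> L" for x y
  proof (cases "x = y")
    case True then show ?thesis using subspace_0[OF L_sub] by simp
  next
    case False
    have "br (Emat x y) (Emat y x) \<in> L" using L_br off False by metis
    then show ?thesis using False by (simp add: br_EE)
  qed
  obtain H v where H: "H \<in> L" "diagonal H" "\<forall>a. 0 \<le> H $ a $ a" "H $ v $ v = 3"
    using anchor by blast
  have "H $ v $ v \<le> (\<Sum>a\<in>UNIV. H $ a $ a)"
    by (rule member_le_sum) (use H(3) in auto)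
  then have "(\<Sum>a\<in>UNIV. H $ a $ a) \<noteq> 0" using H(4) by simp
  from gl_span[OF L_sub _ _ H(1) this] show ?thesis using off dd by blast
qed

end

lemma mm_diff_ldistrib: "(A::real^'m::finite^'n::finite) ** ((B::real^'p::finite^'m) - C) = A ** B - A ** C"
  by (simp add: matrix_matrix_mult_def vec_eq_iff sum_subtractf right_diff_distrib)

lemma mm_diff_rdistrib: "((A::real^'m::finite^'n::finite) - B) ** (C::real^'p::finite^'m) = A ** C - B ** C"
  by (simp add: matrix_matrix_mult_def vec_eq_iff sum_subtractf left_diff_distrib)

lemma jacobi: "br X (br Y Z) = br (br X Y) Z - br (br X Z) (Y::real^'n::finite^'n)"
  unfolding br_def by (simp add: mm_diff_ldistrib mm_diff_rdistrib matrix_mul_assoc algebra_simps)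

lemma two_times_mat: "(2::real^'n::finite^'m::finite) * M = 2 *\<^sub>R M"
  by (simp add: vec_eq_iff)

lemma ideal_full:
  fixes V :: "(real^'n::finite^'n) set"
  assumes V: "subspace V" and id: "\<And>X Y. X \<in> V \<Longrightarrow> br X Y \<in> V"
    and Exy: "Emat x y \<in> V" "x \<noteq> y" and T0: "T0 \<in> V" "(\<Sum>a\<in>UNIV. T0 $ a $ a) \<noteq> 0"
  shows "V = UNIV"
proof -
  have r1: "Emat x b \<in> V" if "b \<noteq> x" for b
  proof (cases "b = y")
    case True then show ?thesis using Exy by simp
  next
    case False
    have "br (Emat x y) (Emat y b) \<in> V" by (rule id[OF Exy(1)])
    then show ?thesis using that by (simp add: br_EE)
  qed
  have r2: "Emat a x \<in> V" if "a \<noteq> x" for a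
  proof -
    have "br (Emat x a) (Emat a x) \<in> V" by (rule id[OF r1]) (use that in simp)
    then have d: "Emat x x - Emat a a \<in> V" using that by (simp add: br_EE)
    have "br (Emat x x - Emat a a) (Emat a x) \<in> V" by (rule id[OF d])
    moreover have "br (Emat x x - Emat a a) (Emat a x) = (-2) *\<^sub>R Emat a x"
      using br_add_left[of "Emat x x" "- Emat a a" "Emat a x"] br_scale_left[of "-1" "Emat a a" "Emat a x"] that
      by (simp add: br_EE two_times_mat)
    ultimately have "(-2) *\<^sub>R Emat a x \<in> V" by simp
    then have "(-1/2) *\<^sub>R ((-2) *\<^sub>R Emat a x) \<in> V" by (rule subspace_scale[OF V])
    then show ?thesis by simp
  qed
  have off: "Emat a b \<in> V" if "a \<noteq> b" for a b
  proof (cases "a = x")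
    case True then show ?thesis using r1 that by simp
  next
    case ax: False
    show ?thesis
    proof (cases "b = x")
      case True then show ?thesis using r2 ax by simp
    next
      case False
      have "br (Emat x b) (Emat a x) \<in> V" by (rule id[OF r1[OF False]])
      then have "- Emat a b \<in> V" using that False ax by (simp add: br_EE)
      then show ?thesis using subspace_neg[OF V] by fastforce
    qed
  qed
  have dd: "Emat a a - Emat b b \<in> V" for a b
  proof (cases "a = b")
    case True then show ?thesis using subspace_0[OF V] by simp
  next
    case False
    have "br (Emat a b) (Emat b a) \<in> V" by (rule id[OF off[OF False]])
    then show ?thesis using False by (simp add: br_EE)
  qed
  from gl_span[OF V _ _ T0] show ?thesis using off dd by blast
qed


lemma nonloop_path: "(v, w) \<in> R\<^sup>* \<Longrightarrow> v \<noteq> w \<Longrightarrow> \<exists>a b. (a, b) \<in> R \<and> a \<noteq> b"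
proof (induction rule: rtrancl_induct)
  case base then show ?case by simp
next
  case (step y z)
  then show ?case by (cases "y = z") auto
qed

lemma sum_delta_scaleR:
  assumes "finite S" "b \<in> S"
  shows "(\<Sum>g\<in>S. (if g = b then 1 else 0) *\<^sub>R g) = (b::'a::real_vector)"
proof -
  have "(\<Sum>g\<in>S. (if g = b then 1 else 0) *\<^sub>R g) = (\<Sum>g\<in>S. if g = b then b else 0)"
    by (rule sum.cong) auto
  also have "\<dots> = b" using assms by simp
  finally show ?thesis .
qed

theorem theorem3:
  fixes Palpha Pbeta :: "('n::finite \<times> 'n) set"
  assumes contr_comp: "\<forall>v. card (weak_component Pbeta v) \<ge> 2 \<and>
                          strongly_connected_set Pbeta (weak_component Pbeta v)"
    and union_sc: "strongly_connected_set
                     (drift_arcs ((\<lambda>(i, j). Emat i j) ` Palpha) \<union> Pbeta) UNIV"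
    and self_loop: "\<exists>v. (v, v) \<in> drift_arcs ((\<lambda>(i, j). Emat i j) ` Palpha) \<union> Pbeta"
  shows "structurally_accessible ((\<lambda>(i, j). Emat i j) ` Palpha) ((\<lambda>(i, j). Emat i j) ` Pbeta)"
proof -
  let ?E = "\<lambda>(i, j). Emat i j :: real^'n^'n"
  have inj: "inj_on ?E S" for S
    by (rule inj_onI) (auto simp: Emat_inj)
  have da: "drift_arcs (?E ` Palpha) = Palpha"
  proof -
    have "(\<exists>A\<in>?E ` Palpha. A $ i $ j \<noteq> 0) \<longleftrightarrow> (i, j) \<in> Palpha" for i j
    proof
      assume "\<exists>A\<in>?E ` Palpha. A $ i $ j \<noteq> 0"
      then obtain a b where ab: "(a, b) \<in> Palpha" "Emat a b $ i $ j \<noteq> 0" by auto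
      then have "i = a \<and> j = b" by (simp add: Emat_nth split: if_splits)
      then show "(i, j) \<in> Palpha" using ab by simp
    next
      assume ij: "(i, j) \<in> Palpha"
      have "Emat i j \<in> ?E ` Palpha" by (rule image_eqI[of _ _ "(i, j)"]) (simp_all add: ij)
      moreover have "Emat i j $ i $ j \<noteq> 0" by (simp add: Emat_nth)
      ultimately show "\<exists>A\<in>?E ` Palpha. A $ i $ j \<noteq> 0" by blast
    qed
    then show ?thesis unfolding drift_arcs_def by auto
  qed
  define v0 where "v0 = (SOME v. (v, v) \<in> Palpha)"
  have v0: "(\<exists>v. (v, v) \<in> Palpha) \<Longrightarrow> (v0, v0) \<in> Palpha"
    unfolding v0_def by (rule someI_ex)
  define l where "l = (\<lambda>g. if g = Emat v0 v0 then 3 else (1::real))"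
  define B0 where "B0 = (\<Sum>g\<in>?E ` Palpha. l g *\<^sub>R g)"
  have B0r: "B0 \<in> Sigma_r (?E ` Palpha)"
    unfolding Sigma_r_def B0_def l_def by (intro CollectI exI[of _ l]) (auto simp: l_def)
  have B0nth: "B0 $ i $ j = (if (i, j) \<in> Palpha then (if i = v0 \<and> j = v0 then 3 else 1) else 0)" for i j
  proof -
    have "B0 = (\<Sum>p\<in>Palpha. l (?E p) *\<^sub>R ?E p)"
      unfolding B0_def by (subst sum.reindex[OF inj]) (simp add: comp_def)
    then have "B0 $ i $ j = (\<Sum>p\<in>Palpha. l (?E p) * ?E p $ i $ j)" by simp
    also have "\<dots> = (\<Sum>p\<in>Palpha. if p = (i, j) then l (Emat i j) else 0)"
      by (rule sum.cong) (auto simp: Emat_nth split: if_splits)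
    also have "\<dots> = (if (i, j) \<in> Palpha then l (Emat i j) else 0)" by simp
    also have "\<dots> = (if (i, j) \<in> Palpha then (if i = v0 \<and> j = v0 then 3 else 1) else 0)"
      unfolding l_def by (simp add: Emat_inj)
    finally show ?thesis .
  qed
  have finb: "finite Pbeta" by simp
  obtain xs where xs: "set xs = Pbeta" using finite_list[OF finb] by blast
  define m where "m = length xs"
  define B where "B = (\<lambda>i. ?E (xs ! (i - 1)))"
  have Pb_ne: "Pbeta \<noteq> {}"
  proof
    assume e: "Pbeta = {}"
    have "weak_component Pbeta undefined = {undefined}"
      unfolding weak_component_def e by simp
    moreover have "card (weak_component Pbeta undefined) \<ge> 2" using contr_comp by blast
    ultimately show False by simp
  qed
  then have m1: "m \<ge> 1" unfolding m_def using xs by (cases xs) auto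
  have Bf: "\<forall>i\<in>{1..m}. B i \<in> Sigma_f (?E ` Pbeta)"
  proof
    fix i assume i: "i \<in> {1..m}"
    then have "xs ! (i - 1) \<in> Pbeta" using xs unfolding m_def by auto
    then have Bi: "B i \<in> ?E ` Pbeta" unfolding B_def by blast
    have sd: "B i = (\<Sum>g\<in>?E ` Pbeta. (if g = B i then 1 else 0) *\<^sub>R g)"
      by (rule sum_delta_scaleR[OF _ Bi, symmetric]) simp
    show "B i \<in> Sigma_f (?E ` Pbeta)" unfolding Sigma_f_def
      by (rule CollectI, rule exI[of _ "\<lambda>g. if g = B i then 1 else 0"]) (use sd in simp)
  qed
  define AA where "AA = insert B0 ((\<lambda>p. B0 + ?E p) ` Pbeta)"
  have real: "\<forall>A\<in>AA. \<exists>v. A = B0 + (\<Sum>i\<in>{1..m}. v i *\<^sub>R B i)"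
  proof
    fix A assume "A \<in> AA"
    then consider "A = B0" | p where "p \<in> Pbeta" "A = B0 + ?E p" unfolding AA_def by blast
    then show "\<exists>v. A = B0 + (\<Sum>i\<in>{1..m}. v i *\<^sub>R B i)"
    proof cases
      case 1 then show ?thesis by (intro exI[of _ "\<lambda>_. 0"]) simp
    next
      case (2 p)
      then obtain k where k: "k < m" "xs ! k = p" using xs unfolding m_def by (metis in_set_conv_nth)
      have "(\<Sum>i\<in>{1..m}. (if i = Suc k then 1 else 0) *\<^sub>R B i) = (\<Sum>i\<in>{1..m}. if i = Suc k then B (Suc k) else 0)"
        by (rule sum.cong) auto
      also have "\<dots> = B (Suc k)" using k(1) by simp
      also have "\<dots> = ?E p" unfolding B_def using k(2) by simp
      finally show ?thesis using 2 by (intro exI[of _ "\<lambda>i. if i = Suc k then 1 else 0"]) simp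
    qed
  qed
  have full: "V = UNIV" if V: "subspace V" and AV: "AA \<subseteq> V" and cl: "\<forall>X\<in>V. \<forall>A\<in>AA. X ** A - A ** X \<in> V" for V
  proof -
    have brV: "br X A \<in> V" if "X \<in> V" "A \<in> AA" for X A using cl that unfolding br_def by blast
    define N where "N = {Y. \<forall>X\<in>V. br X Y \<in> V}"
    have sN: "subspace N" unfolding subspace_def N_def
    proof (intro conjI ballI allI CollectI)
      fix X assume "X \<in> V"
      show "br X 0 \<in> V" unfolding br_def using subspace_0[OF V] by simp
    next
      fix Y Z X assume Y: "Y \<in> {Y. \<forall>X\<in>V. br X Y \<in> V}" and Z: "Z \<in> {Y. \<forall>X\<in>V. br X Y \<in> V}" and X: "X \<in> V"
      show "br X (Y + Z) \<in> V" unfolding br_add_right using Y Z X subspace_add[OF V] by blast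
    next
      fix c Y X assume Y: "Y \<in> {Y. \<forall>X\<in>V. br X Y \<in> V}" and X: "X \<in> V"
      show "br X (c *\<^sub>R Y) \<in> V" unfolding br_scale_right using Y X subspace_scale[OF V] by blast
    qed
    have lN: "br Y Z \<in> N" if "Y \<in> N" "Z \<in> N" for Y Z
      unfolding N_def
    proof (intro CollectI ballI)
      fix X assume X: "X \<in> V"
      have "br (br X Y) Z \<in> V" using that X unfolding N_def by blast
      moreover have "br (br X Z) Y \<in> V" using that X unfolding N_def by blast
      ultimately show "br X (br Y Z) \<in> V" unfolding jacobi by (rule subspace_diff[OF V])
    qed
    have B0N: "B0 \<in> N" unfolding N_def using brV AA_def by blast
    have EN: "Emat a b \<in> N" if ab: "(a, b) \<in> Pbeta" for a b
      unfolding N_def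
    proof (intro CollectI ballI)
      fix X assume X: "X \<in> V"
      have "B0 + Emat a b \<in> AA" unfolding AA_def using ab by force
      then have "br X (B0 + Emat a b) \<in> V" by (rule brV[OF X])
      moreover have "br X B0 \<in> V" using brV[OF X] AA_def by blast
      ultimately have "br X (B0 + Emat a b) - br X B0 \<in> V" by (rule subspace_diff[OF V])
      then show "br X (Emat a b) \<in> V" unfolding br_add_right by simp
    qed
    have cr: "core N Palpha Pbeta B0 v0"
    proof
      show "subspace N" by (rule sN)
      show "\<And>X Y. X \<in> N \<Longrightarrow> Y \<in> N \<Longrightarrow> br X Y \<in> N" by (rule lN)
      show "B0 \<in> N" by (rule B0N)
      show "\<And>a b. (a, b) \<in> Pbeta \<Longrightarrow> Emat a b \<in> N" by (rule EN)
      show "\<forall>v. card (weak_component Pbeta v) \<ge> 2 \<and> strongly_connected_set Pbeta (weak_component Pbeta v)"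
        by (rule contr_comp)
      show "strongly_connected_set (Palpha \<union> Pbeta) UNIV" using union_sc unfolding da .
      show "\<exists>v. (v, v) \<in> Palpha \<union> Pbeta" using self_loop unfolding da .
      show "\<And>i j. B0 $ i $ j = (if (i, j) \<in> Palpha then (if i = v0 \<and> j = v0 then 3 else 1) else 0)"
        by (rule B0nth)
      show "(\<exists>v. (v, v) \<in> Palpha) \<Longrightarrow> (v0, v0) \<in> Palpha" by (rule v0)
    qed
    have NU: "N = UNIV" by (rule core.core_full[OF cr])
    have id: "br X Y \<in> V" if "X \<in> V" for X Y using NU that unfolding N_def by blast
    have B0V: "B0 \<in> V" using AV AA_def by blast
    have EV: "Emat a b \<in> V" if ab: "(a, b) \<in> Pbeta" for a b
    proof -
      have "B0 + Emat a b \<in> V" using AV ab unfolding AA_def by force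
      then have "B0 + Emat a b - B0 \<in> V" using B0V by (rule subspace_diff[OF V])
      then show ?thesis by simp
    qed
    obtain w where w: "core.sim Pbeta undefined w" "w \<noteq> undefined" using core.other[OF cr] by blast
    have "(undefined, w) \<in> Pbeta\<^sup>*" by (rule core.sim_path[OF cr w(1)])
    then have "\<exists>a b. (a, b) \<in> Pbeta \<and> a \<noteq> b" by (rule nonloop_path) (use w(2) in simp)
    then obtain a b where ab: "(a, b) \<in> Pbeta" "a \<noteq> b" by blast
    have T0: "\<exists>T0\<in>V. (\<Sum>a\<in>UNIV. T0 $ a $ a) \<noteq> 0"
    proof (cases "\<exists>v. (v, v) \<in> Pbeta")
      case True
      then obtain v where v: "(v, v) \<in> Pbeta" by blast
      have "(\<Sum>a\<in>UNIV. Emat v v $ a $ a) = 1" by (simp add: Emat_nth)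
      then show ?thesis using EV[OF v] by force
    next
      case False
      then have "\<exists>v. (v, v) \<in> Palpha" using self_loop unfolding da by blast
      then have vv: "(v0, v0) \<in> Palpha" by (rule v0)
      have "B0 $ v0 $ v0 \<le> (\<Sum>a\<in>UNIV. B0 $ a $ a)"
        by (rule member_le_sum) (auto simp: B0nth)
      then have "(\<Sum>a\<in>UNIV. B0 $ a $ a) \<noteq> 0" using vv B0nth[of v0 v0] by simp
      then show ?thesis using B0V by blast
    qed
    then obtain T0 where "T0 \<in> V" "(\<Sum>a\<in>UNIV. T0 $ a $ a) \<noteq> 0" by blast
    then show ?thesis using ideal_full[OF V id EV[OF ab(1)] ab(2)] by blast
  qed
  have acc: "accessible B0 m B" by (rule accessible_of_full[OF real full])
  show ?thesis unfolding structurally_accessible_def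
    using m1 B0r Bf acc by blast
qed

end
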